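(* Let $A$ generate a $C_0$-semigroup on a Banach space $X$, let $U$ be a finite-dimensional Banach space, let $B\in\mathcal{L}(U,X_{-1})$, and let $Z$ be one of $E_\Phi$ (for a Young function $\Phi$), $L^1$ or $L^\infty$. For $f\in U$ let $Bf\in\mathcal{L}(\mathbb{C},X_{-1})$ denote $z\mapsto zBf$. Then (i) $\Sigma(A,B)$ is $Z$-ISS if and only if $\Sigma(A,Bf)$ is $Z$-ISS for every $f\in U$; (ii) $\Sigma(A,B)$ is integral ISS if and only if $\Sigma(A,Bf)$ is integral ISS for every $f\in U$.
   Context: $X_{-1}$ is the completion of $X$ w.r.t. $\|(\beta-A)^{-1}\cdot\|$, $\beta\in\rho(A)$; $T_{-1}$ extends the semigroup $T$ to $X_{-1}$. $\Sigma(A,B)$ denotes the system $\dot x=Ax+Bu$, $x(0)=x_0$, with mild solution $x(t)=T_{-1}(t)x_0+\int_0^tT_{-1}(t-s)Bu(s)ds$. $\mathcal{K}$: continuous strictly increasing $\mu:[0,\infty)\to[0,\infty)$ with $\mu(0)=0$; $\mathcal{K}_\infty$: those in $\mathcal{K}$ unbounded; $\mathcal{L}$: continuous strictly decreasing $\gamma:[0,\infty)\to[0,\infty)$ with limit $0$; $\mathcal{KL}$: $\beta:[0,\infty)^2\to[0,\infty)$ with $\beta(\cdot,t)\in\mathcal{K}$ for all $t\ge0$ and $\beta(s,\cdot)\in\mathcal{L}$ for all $s>0$. $\Sigma(A,B)$ is $Z$-ISS if there are $\beta\in\mathcal{KL}$, $\mu\in\mathcal{K}_\infty$ such that for all $t\ge0$,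 $x_0\in X$, $u\in Z(0,t;U)$: $x(t)\in X$ and $\|x(t)\|\le\beta(\|x_0\|,t)+\mu(\|u\|_{Z(0,t;U)})$. It is integral ISS if there are $\beta\in\mathcal{KL}$, $\theta\in\mathcal{K}_\infty$, $\mu\in\mathcal{K}$ such that for all $t\ge0$, $x_0\in X$, $u\in L^\infty(0,t;U)$: $x(t)\in X$ and $\|x(t)\|\le\beta(\|x_0\|,t)+\theta(\int_0^t\mu(\|u(s)\|)ds)$. A Young function is a continuous, convex, increasing $\Phi:[0,\infty)\to[0,\infty)$ with $\Phi(x)/x\to0$ ($x\to0$), $\Phi(x)/x\to\infty$ ($x\to\infty$); $E_\Phi(0,t;U)$ is the closure of boundedly supported $L^\infty$ functions in the Orlicz space $L_\Phi(0,t;U)$ normed by $\inf\{k>0:\int_0^t\Phi(\|u(s)\|/k)ds\le1\}$. *)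

theory Defs
  imports "HOL-Analysis.Analysis"
begin

text \<open>The library has no complex vector spaces.  A complex normed space is
modelled as a real normed space together with the operator I of
multiplication by the imaginary unit.\<close>

definition cplx_struct :: "('a::real_normed_vector \<Rightarrow> 'a) \<Rightarrow> bool" where
  "cplx_struct I \<longleftrightarrow> linear I \<and> (\<forall>x. I (I x) = - x) \<and>
     (\<forall>x a b. norm (a *\<^sub>R x + b *\<^sub>R I x) = cmod (Complex a b) * norm x)"

definition cscale :: "('a::real_vector \<Rightarrow> 'a) \<Rightarrow> complex \<Rightarrow> 'a \<Rightarrow> 'a" where
  "cscale I c x = Re c *\<^sub>R x + Im c *\<^sub>R I x"

definition bounded_clin ::
  "('a::real_normed_vector \<Rightarrow> 'a) \<Rightarrow> ('b::real_normed_vector \<Rightarrow> 'b) \<Rightarrow> ('a \<Rightarrow> 'b) \<Rightarrow> bool" where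
  "bounded_clin I1 I2 f \<longleftrightarrow> bounded_linear f \<and> (\<forall>x. f (I1 x) = I2 (f x))"

definition C0_semigroup :: "('x::banach \<Rightarrow> 'x) \<Rightarrow> (real \<Rightarrow> 'x \<Rightarrow> 'x) \<Rightarrow> bool" where
  "C0_semigroup I T \<longleftrightarrow>
     (\<forall>t\<ge>0. bounded_clin I I (T t)) \<and>
     T 0 = id \<and>
     (\<forall>s\<ge>0. \<forall>t\<ge>0. T (s + t) = T s \<circ> T t) \<and>
     (\<forall>x. ((\<lambda>t. T t x) \<longlongrightarrow> x) (at_right 0))"

definition gen_dom :: "(real \<Rightarrow> 'x::real_normed_vector \<Rightarrow> 'x) \<Rightarrow> 'x set" where
  "gen_dom T = {x. \<exists>y. ((\<lambda>h. (1 / h) *\<^sub>R (T h x - x)) \<longlongrightarrow> y) (at_right 0)}"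

definition gen :: "(real \<Rightarrow> 'x::real_normed_vector \<Rightarrow> 'x) \<Rightarrow> 'x \<Rightarrow> 'x" where
  "gen T x = Lim (at_right 0) (\<lambda>h. (1 / h) *\<^sub>R (T h x - x))"

definition resolv :: "('x::real_normed_vector \<Rightarrow> 'x) \<Rightarrow> (real \<Rightarrow> 'x \<Rightarrow> 'x) \<Rightarrow> complex \<Rightarrow> 'x \<Rightarrow> 'x" where
  "resolv I T \<beta> x = (THE y. y \<in> gen_dom T \<and> cscale I \<beta> y - gen T y = x)"

definition in_resolvent_set :: "('x::real_normed_vector \<Rightarrow> 'x) \<Rightarrow> (real \<Rightarrow> 'x \<Rightarrow> 'x) \<Rightarrow> complex \<Rightarrow> bool" where
  "in_resolvent_set I T \<beta> \<longleftrightarrow>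
     (\<forall>x. \<exists>!y. y \<in> gen_dom T \<and> cscale I \<beta> y - gen T y = x) \<and>
     bounded_linear (resolv I T \<beta>)"

text \<open>(Iy, J, Tm1) realises the extrapolation space X_{-1} (completion of X w.r.t.
  the norm of the resolvent, with J the canonical dense embedding) and the
  extrapolated semigroup T_{-1}.\<close>
definition extrapolation ::
  "('x::banach \<Rightarrow> 'x) \<Rightarrow> (real \<Rightarrow> 'x \<Rightarrow> 'x) \<Rightarrow> complex \<Rightarrow>
   ('y::banach \<Rightarrow> 'y) \<Rightarrow> ('x \<Rightarrow> 'y) \<Rightarrow> (real \<Rightarrow> 'y \<Rightarrow> 'y) \<Rightarrow> bool" where
  "extrapolation I T \<beta> Iy J Tm1 \<longleftrightarrow>
     cplx_struct Iy \<and> linear J \<and> (\<forall>x. J (I x) = Iy (J x)) \<and>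
     (\<forall>x. norm (J x) = norm (resolv I T \<beta> x)) \<and>
     closure (range J) = UNIV \<and>
     (\<forall>t\<ge>0. bounded_linear (Tm1 t) \<and> (\<forall>x. Tm1 t (J x) = J (T t x)))"

definition mild ::
  "(real \<Rightarrow> 'y::real_normed_vector \<Rightarrow> 'y) \<Rightarrow> ('x \<Rightarrow> 'y) \<Rightarrow> ('u \<Rightarrow> 'y) \<Rightarrow> 'x \<Rightarrow> (real \<Rightarrow> 'u) \<Rightarrow> real \<Rightarrow> 'y" where
  "mild Tm1 J B x0 u t = Tm1 t (J x0) + integral {0..t} (\<lambda>s. Tm1 (t - s) (B (u s)))"

definition classK :: "(real \<Rightarrow> real) \<Rightarrow> bool" where
  "classK \<mu> \<longleftrightarrow> continuous_on {0..} \<mu> \<and> strict_mono_on {0..} \<mu> \<and> \<mu> 0 = 0"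

definition classKinf :: "(real \<Rightarrow> real) \<Rightarrow> bool" where
  "classKinf \<mu> \<longleftrightarrow> classK \<mu> \<and> filterlim \<mu> at_top at_top"

definition classL :: "(real \<Rightarrow> real) \<Rightarrow> bool" where
  "classL \<gamma> \<longleftrightarrow> continuous_on {0..} \<gamma> \<and> (\<forall>x\<ge>0. \<gamma> x \<ge> 0) \<and>
     (\<forall>x y. 0 \<le> x \<longrightarrow> x < y \<longrightarrow> \<gamma> y < \<gamma> x) \<and> (\<gamma> \<longlongrightarrow> 0) at_top"

definition classKL :: "(real \<Rightarrow> real \<Rightarrow> real) \<Rightarrow> bool" where
  "classKL \<beta> \<longleftrightarrow> (\<forall>t\<ge>0. classK (\<lambda>s. \<beta> s t)) \<and> (\<forall>s>0. classL (\<lambda>t. \<beta> s t))"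

definition Young :: "(real \<Rightarrow> real) \<Rightarrow> bool" where
  "Young \<Phi> \<longleftrightarrow> continuous_on {0..} \<Phi> \<and> convex_on {0..} \<Phi> \<and> mono_on {0..} \<Phi> \<and>
     (\<forall>x\<ge>0. \<Phi> x \<ge> 0) \<and>
     ((\<lambda>x. \<Phi> x / x) \<longlongrightarrow> 0) (at_right 0) \<and> filterlim (\<lambda>x. \<Phi> x / x) at_top at_top"

definition meas_on :: "real \<Rightarrow> (real \<Rightarrow> 'u::real_normed_vector) \<Rightarrow> bool" where
  "meas_on t u \<longleftrightarrow> u \<in> borel_measurable (restrict_space lebesgue {0..t})"

definition Linf_mem :: "real \<Rightarrow> (real \<Rightarrow> 'u::real_normed_vector) \<Rightarrow> bool" where
  "Linf_mem t u \<longleftrightarrow> meas_on t u \<and> (\<exists>C. AE s in lebesgue. s \<in> {0..t} \<longrightarrow> norm (u s) \<le> C)"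

definition Linf_norm :: "real \<Rightarrow> (real \<Rightarrow> 'u::real_normed_vector) \<Rightarrow> real" where
  "Linf_norm t u = Inf {C. 0 \<le> C \<and> (AE s in lebesgue. s \<in> {0..t} \<longrightarrow> norm (u s) \<le> C)}"

definition L1_mem :: "real \<Rightarrow> (real \<Rightarrow> 'u::real_normed_vector) \<Rightarrow> bool" where
  "L1_mem t u \<longleftrightarrow> meas_on t u \<and>
     (\<integral>\<^sup>+ s. ennreal (norm (u s)) * indicator {0..t} s \<partial>lebesgue) < \<infinity>"

definition L1_norm :: "real \<Rightarrow> (real \<Rightarrow> 'u::real_normed_vector) \<Rightarrow> real" where
  "L1_norm t u = enn2real (\<integral>\<^sup>+ s. ennreal (norm (u s)) * indicator {0..t} s \<partial>lebesgue)"

definition orlicz_ok :: "(real \<Rightarrow> real) \<Rightarrow> real \<Rightarrow> (real \<Rightarrow> 'u::real_normed_vector) \<Rightarrow> real \<Rightarrow> bool" where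
  "orlicz_ok \<Phi> t u k \<longleftrightarrow> 0 < k \<and>
     (\<integral>\<^sup>+ s. ennreal (\<Phi> (norm (u s) / k)) * indicator {0..t} s \<partial>lebesgue) \<le> 1"

definition LPhi_mem :: "(real \<Rightarrow> real) \<Rightarrow> real \<Rightarrow> (real \<Rightarrow> 'u::real_normed_vector) \<Rightarrow> bool" where
  "LPhi_mem \<Phi> t u \<longleftrightarrow> meas_on t u \<and> (\<exists>k. orlicz_ok \<Phi> t u k)"

definition LPhi_norm :: "(real \<Rightarrow> real) \<Rightarrow> real \<Rightarrow> (real \<Rightarrow> 'u::real_normed_vector) \<Rightarrow> real" where
  "LPhi_norm \<Phi> t u = Inf {k. orlicz_ok \<Phi> t u k}"

definition EPhi_mem :: "(real \<Rightarrow> real) \<Rightarrow> real \<Rightarrow> (real \<Rightarrow> 'u::real_normed_vector) \<Rightarrow> bool" where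
  "EPhi_mem \<Phi> t u \<longleftrightarrow> LPhi_mem \<Phi> t u \<and>
     (\<forall>\<epsilon>>0. \<exists>v. Linf_mem t v \<and> LPhi_mem \<Phi> t (\<lambda>s. u s - v s) \<and>
                 LPhi_norm \<Phi> t (\<lambda>s. u s - v s) < \<epsilon>)"

datatype Zspace = EPhi "real \<Rightarrow> real" | L1 | Linfty

fun Z_mem :: "Zspace \<Rightarrow> real \<Rightarrow> (real \<Rightarrow> 'u::real_normed_vector) \<Rightarrow> bool" where
  "Z_mem (EPhi \<Phi>) t u = EPhi_mem \<Phi> t u"
| "Z_mem L1 t u = L1_mem t u"
| "Z_mem Linfty t u = Linf_mem t u"

fun Z_norm :: "Zspace \<Rightarrow> real \<Rightarrow> (real \<Rightarrow> 'u::real_normed_vector) \<Rightarrow> real" where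
  "Z_norm (EPhi \<Phi>) t u = LPhi_norm \<Phi> t u"
| "Z_norm L1 t u = L1_norm t u"
| "Z_norm Linfty t u = Linf_norm t u"

text \<open>"x(t) \<in> X" is expressed as "x(t) = J \<xi> for some \<xi> \<in> X", and then
  the X-norm of x(t) is the norm of \<xi> (J is injective).\<close>

definition Z_ISS ::
  "Zspace \<Rightarrow> (real \<Rightarrow> 'y::real_normed_vector \<Rightarrow> 'y) \<Rightarrow> ('x::real_normed_vector \<Rightarrow> 'y) \<Rightarrow>
   ('u::real_normed_vector \<Rightarrow> 'y) \<Rightarrow> bool" where
  "Z_ISS Z Tm1 J B \<longleftrightarrow> (\<exists>\<beta> \<mu>. classKL \<beta> \<and> classKinf \<mu> \<and>
     (\<forall>t\<ge>0. \<forall>x0. \<forall>u. Z_mem Z t u \<longrightarrow>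
        (\<exists>\<xi>. J \<xi> = mild Tm1 J B x0 u t \<and>
              norm \<xi> \<le> \<beta> (norm x0) t + \<mu> (Z_norm Z t u))))"

definition integral_ISS ::
  "(real \<Rightarrow> 'y::real_normed_vector \<Rightarrow> 'y) \<Rightarrow> ('x::real_normed_vector \<Rightarrow> 'y) \<Rightarrow>
   ('u::real_normed_vector \<Rightarrow> 'y) \<Rightarrow> bool" where
  "integral_ISS Tm1 J B \<longleftrightarrow> (\<exists>\<beta> \<theta> \<mu>. classKL \<beta> \<and> classKinf \<theta> \<and> classK \<mu> \<and>
     (\<forall>t\<ge>0. \<forall>x0. \<forall>u. Linf_mem t u \<longrightarrow>
        (\<exists>\<xi>. J \<xi> = mild Tm1 J B x0 u t \<and>
              norm \<xi> \<le> \<beta> (norm x0) t + \<theta> (integral {0..t} (\<lambda>s. \<mu> (norm (u s)))))))"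

definition Bcol :: "('y::real_vector \<Rightarrow> 'y) \<Rightarrow> ('u \<Rightarrow> 'y) \<Rightarrow> 'u \<Rightarrow> complex \<Rightarrow> 'y" where
  "Bcol Iy B f = (\<lambda>z. cscale Iy z (B f))"

end

theory Submission
  imports Defs
begin


lemma closed_span_of_bound:
  fixes E :: "'a::banach set"
  assumes fin: "finite E" and K0: "K \<ge> 0" and K: "\<forall>a. (\<Sum>b\<in>E. \<bar>a b\<bar>) \<le> K * norm (\<Sum>b\<in>E. a b *\<^sub>R b)"
  shows "closed (span E)"
proof (rule closed_sequential_limits[THEN iffD2], intro allI impI, elim conjE)
  fix x l assume xin: "\<forall>n. x n \<in> span E" and lim: "x \<longlonglongrightarrow> l"
  have "\<forall>n. \<exists>a. x n = (\<Sum>b\<in>E. a b *\<^sub>R b)"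
    using xin span_finite[OF fin] by auto
  then obtain a where a: "\<And>n. x n = (\<Sum>b\<in>E. a n b *\<^sub>R b)" by metis
  have C: "Cauchy x" using lim by (simp add: LIMSEQ_imp_Cauchy)
  have coordC: "Cauchy (\<lambda>n. a n b)" if "b \<in> E" for b
  proof (rule metric_CauchyI)
    fix e :: real assume e: "e > 0"
    obtain M where M: "\<And>m n. m \<ge> M \<Longrightarrow> n \<ge> M \<Longrightarrow> dist (x m) (x n) < e / (K + 1)"
      using metric_CauchyD[OF C, of "e/(K+1)"] e K0 by auto
    show "\<exists>M. \<forall>m\<ge>M. \<forall>n\<ge>M. dist (a m b) (a n b) < e"
    proof (intro exI allI impI)
      fix m n assume mn: "m \<ge> M" "n \<ge> M"
      have "dist (a m b) (a n b) = \<bar>a m b - a n b\<bar>" by (simp add: dist_real_def)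
      also have "\<dots> \<le> (\<Sum>b\<in>E. \<bar>a m b - a n b\<bar>)"
        using fin that by (intro member_le_sum) auto
      also have "\<dots> \<le> K * norm (\<Sum>b\<in>E. (a m b - a n b) *\<^sub>R b)" using spec[OF K, of "\<lambda>b. a m b - a n b"] by simp
      also have "(\<Sum>b\<in>E. (a m b - a n b) *\<^sub>R b) = x m - x n"
        by (simp add: a scaleR_diff_left sum_subtractf)
      also have "K * norm (x m - x n) \<le> K * (e / (K+1))"
        using M[OF mn] K0 by (intro mult_left_mono) (auto simp: dist_norm)
      also have "\<dots> < e" using K0 e by (simp add: field_simps)
      finally show "dist (a m b) (a n b) < e" .
    qed
  qed
  have "\<forall>b\<in>E. \<exists>L. (\<lambda>n. a n b) \<longlonglongrightarrow> L"
    using coordC by (simp add: Cauchy_convergent_iff convergent_def)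
  then obtain \<alpha> where \<alpha>: "\<And>b. b \<in> E \<Longrightarrow> (\<lambda>n. a n b) \<longlonglongrightarrow> \<alpha> b" by metis
  have "(\<lambda>n. \<Sum>b\<in>E. a n b *\<^sub>R b) \<longlonglongrightarrow> (\<Sum>b\<in>E. \<alpha> b *\<^sub>R b)"
    by (intro tendsto_sum tendsto_scaleR \<alpha> tendsto_const)
  moreover have "x = (\<lambda>n. \<Sum>b\<in>E. a n b *\<^sub>R b)" using a by auto
  ultimately have "x \<longlonglongrightarrow> (\<Sum>b\<in>E. \<alpha> b *\<^sub>R b)" by simp
  then have "l = (\<Sum>b\<in>E. \<alpha> b *\<^sub>R b)" using lim LIMSEQ_unique by blast
  then show "l \<in> span E" using span_finite[OF fin] by auto
qed

lemma fin_indep_bound: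
  fixes E :: "'a::banach set"
  assumes "finite E" "independent E"
  shows "\<exists>K\<ge>0. \<forall>a. (\<Sum>b\<in>E. \<bar>a b\<bar>) \<le> K * norm (\<Sum>b\<in>E. a b *\<^sub>R b)"
  using assms
proof (induction E rule: finite_induct)
  case empty show ?case by auto
next
  case (insert e E)
  have indE: "independent E" using insert.prems by (meson independent_mono subset_insertI)
  have nin: "e \<notin> span E" using insert.prems insert.hyps(2) by (simp add: independent_insert)
  obtain K where K0: "K \<ge> 0" and K: "\<forall>a. (\<Sum>b\<in>E. \<bar>a b\<bar>) \<le> K * norm (\<Sum>b\<in>E. a b *\<^sub>R b)"
    using insert.IH indE by blast
  have cl: "closed (span E)" by (rule closed_span_of_bound[OF insert.hyps(1) K0 K])
  define d where "d = infdist e (span E)"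
  have d: "d > 0" unfolding d_def
    using infdist_pos_not_in_closed[OF cl _ nin] span_zero by auto
  show ?case
  proof (intro exI[of _ "(1 + K * norm e) / d + K"] conjI allI)
    show "0 \<le> (1 + K * norm e) / d + K" using d K0 by simp
    fix a :: "'a \<Rightarrow> real"
    define w where "w = (\<Sum>b\<in>E. a b *\<^sub>R b)"
    define x where "x = a e *\<^sub>R e + w"
    have xs: "(\<Sum>b\<in>insert e E. a b *\<^sub>R b) = x"
      using insert.hyps by (simp add: x_def w_def)
    have wspan: "w \<in> span E" unfolding w_def
      by (intro span_sum span_scale span_base) 
    have 1: "\<bar>a e\<bar> * d \<le> norm x"
    proof (cases "a e = 0")
      case True then show ?thesis by simp
    next
      case False
      have "- ((1 / a e) *\<^sub>R w) \<in> span E" using wspan by (intro span_neg span_scale)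
      then have "d \<le> dist e (- ((1 / a e) *\<^sub>R w))" unfolding d_def by (rule infdist_le)
      also have "\<dots> = norm (e + (1 / a e) *\<^sub>R w)" by (simp add: dist_norm)
      finally have "\<bar>a e\<bar> * d \<le> \<bar>a e\<bar> * norm (e + (1 / a e) *\<^sub>R w)"
        by (simp add: mult_left_mono)
      also have "\<dots> = norm (a e *\<^sub>R (e + (1 / a e) *\<^sub>R w))" by simp
      also have "a e *\<^sub>R (e + (1 / a e) *\<^sub>R w) = x"
        using False by (simp add: x_def scaleR_add_right)
      finally show ?thesis .
    qed
    have 2: "norm w \<le> norm x + \<bar>a e\<bar> * norm e"
    proof -
      have "w = x - a e *\<^sub>R e" by (simp add: x_def)
      then have "norm w \<le> norm x + norm (a e *\<^sub>R e)" using norm_triangle_ineq4[of x "a e *\<^sub>R e"] by simp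
      then show ?thesis by simp
    qed
    have ae: "\<bar>a e\<bar> \<le> norm x / d" using 1 d by (simp add: field_simps)
    have "(\<Sum>b\<in>insert e E. \<bar>a b\<bar>) = \<bar>a e\<bar> + (\<Sum>b\<in>E. \<bar>a b\<bar>)"
      using insert.hyps by simp
    also have "\<dots> \<le> \<bar>a e\<bar> + K * norm w" using K w_def by auto
    also have "\<dots> \<le> \<bar>a e\<bar> + K * (norm x + \<bar>a e\<bar> * norm e)"
      using 2 K0 by (intro add_left_mono mult_left_mono) auto
    also have "\<dots> = \<bar>a e\<bar> * (1 + K * norm e) + K * norm x" by (simp add: algebra_simps)
    also have "\<dots> \<le> (norm x / d) * (1 + K * norm e) + K * norm x"
      using ae K0 by (intro add_right_mono mult_right_mono) auto
    also have "\<dots> = ((1 + K * norm e) / d + K) * norm x" using d by (simp add: field_simps)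
    finally show "(\<Sum>b\<in>insert e E. \<bar>a b\<bar>) \<le> ((1 + K * norm e) / d + K) * norm (\<Sum>b\<in>insert e E. a b *\<^sub>R b)"
      using xs by simp
  qed
qed

lemma fin_dim_coords:
  assumes "\<exists>S. finite S \<and> span S = (UNIV :: 'u::banach set)"
  shows "\<exists>E (\<phi>::'u \<Rightarrow> 'u \<Rightarrow> real) C. finite E \<and> C > 0 \<and> (\<forall>b. bounded_linear (\<phi> b)) \<and>
            (\<forall>b x. \<bar>\<phi> b x\<bar> \<le> C * norm x) \<and> (\<forall>x. x = (\<Sum>b\<in>E. \<phi> b x *\<^sub>R b))"
proof -
  obtain S where S: "finite S" "span S = (UNIV :: 'u set)" using assms by blast
  obtain B where B: "B \<subseteq> S" "independent B" "S \<subseteq> span B"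
    using maximal_independent_subset[of S] by blast
  have finB: "finite B" using B(1) S(1) finite_subset by blast
  have spB: "span B = UNIV" using B(3) S(2) by (metis span_mono span_span top.extremum_uniqueI)
  obtain K where K0: "K \<ge> 0" and K: "\<forall>a. (\<Sum>b\<in>B. \<bar>a b\<bar>) \<le> K * norm (\<Sum>b\<in>B. a b *\<^sub>R b)"
    using fin_indep_bound[OF finB B(2)] by blast
  define \<phi> where "\<phi> b x = representation B x b" for b x
  have rep: "x = (\<Sum>b\<in>B. \<phi> b x *\<^sub>R b)" for x
    unfolding \<phi>_def using sum_representation_eq[OF B(2) _ finB] spB by simp
  have bnd: "\<bar>\<phi> b x\<bar> \<le> (K+1) * norm x" for b x
  proof (cases "b \<in> B")
    case True
    have "\<bar>\<phi> b x\<bar> \<le> (\<Sum>b\<in>B. \<bar>\<phi> b x\<bar>)" using True finB by (intro member_le_sum) auto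
    also have "\<dots> \<le> K * norm x" using K[rule_format, of "\<lambda>b. \<phi> b x"] rep[of x] by simp
    also have "\<dots> \<le> (K+1) * norm x" by (simp add: mult_right_mono)
    finally show ?thesis .
  next
    case False
    then have "\<phi> b x = 0" unfolding \<phi>_def by (meson representation_ne_zero)
    then show ?thesis by (simp add: K0)
  qed
  have lin: "bounded_linear (\<phi> b)" for b
  proof (rule bounded_linear_intro)
    show "\<phi> b (x + y) = \<phi> b x + \<phi> b y" for x y
      unfolding \<phi>_def using representation_add[OF B(2)] spB by simp
    show "\<phi> b (r *\<^sub>R x) = r *\<^sub>R \<phi> b x" for r x
      unfolding \<phi>_def using representation_scale[OF B(2)] spB by simp
    show "norm (\<phi> b x) \<le> norm x * (K+1)" for x using bnd[of b x] by (simp add: mult.commute)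
  qed
  show ?thesis
    by (intro exI[of _ B] exI[of _ \<phi>] exI[of _ "K+1"]) (use finB K0 lin bnd rep in auto)
qed


lemma classK_mono:
  assumes "classK \<mu>" "0 \<le> x" "x \<le> y"
  shows "\<mu> x \<le> \<mu> y"
proof (cases "x = y")
  case False
  then have "x < y" using assms by simp
  moreover have "strict_mono_on {0..} \<mu>" using assms(1) by (simp add: classK_def)
  ultimately have "\<mu> x < \<mu> y" using assms(2,3) by (intro strict_mono_onD[of "{0..}" \<mu>]) auto
  then show ?thesis by simp
qed simp

lemma classK_nonneg:
  assumes "classK \<mu>" "0 \<le> x"
  shows "0 \<le> \<mu> x"
  using classK_mono[OF assms(1) order_refl assms(2)] assms(1) by (simp add: classK_def)

locale sg =
  fixes Ix :: "'x::banach \<Rightarrow> 'x" and T :: "real \<Rightarrow> 'x \<Rightarrow> 'x" and \<beta> :: complex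
    and Iy :: "'y::banach \<Rightarrow> 'y" and J :: "'x \<Rightarrow> 'y" and Tm1 :: "real \<Rightarrow> 'y \<Rightarrow> 'y"
  assumes cx: "cplx_struct Ix" and C0: "C0_semigroup Ix T" and res: "in_resolvent_set Ix T \<beta>"
    and ext: "extrapolation Ix T \<beta> Iy J Tm1"
begin

definition "R = resolv Ix T \<beta>"

lemma T_bl: "t \<ge> 0 \<Longrightarrow> bounded_linear (T t)"
  using C0 by (simp add: C0_semigroup_def bounded_clin_def)

lemma T_I: "t \<ge> 0 \<Longrightarrow> T t (Ix x) = Ix (T t x)"
  using C0 by (simp add: C0_semigroup_def bounded_clin_def)

lemma T_add: "s \<ge> 0 \<Longrightarrow> t \<ge> 0 \<Longrightarrow> T (s + t) x = T s (T t x)"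
  using C0 by (simp add: C0_semigroup_def)

lemma T_0: "T 0 x = x"
  using C0 by (simp add: C0_semigroup_def)

lemma T_lim: "((\<lambda>h. T h x) \<longlongrightarrow> x) (at_right 0)"
  using C0 by (simp add: C0_semigroup_def)

lemma R_bl: "bounded_linear R"
  using res by (simp add: in_resolvent_set_def R_def)

lemma R_prop: "R x \<in> gen_dom T \<and> cscale Ix \<beta> (R x) - gen T (R x) = x"
proof -
  have "\<exists>!y. y \<in> gen_dom T \<and> cscale Ix \<beta> y - gen T y = x" using res by (simp add: in_resolvent_set_def)
  from theI'[OF this] show ?thesis unfolding R_def resolv_def by simp
qed

lemma R_uniq: "y \<in> gen_dom T \<Longrightarrow> cscale Ix \<beta> y - gen T y = x \<Longrightarrow> y = R x"
  using res R_prop unfolding in_resolvent_set_def by metis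

lemma J_lin: "linear J" using ext by (simp add: extrapolation_def)
lemma J_norm: "norm (J x) = norm (R x)" using ext by (simp add: extrapolation_def R_def)
lemma J_dense: "closure (range J) = UNIV" using ext by (simp add: extrapolation_def)
lemma Tm1_bl: "t \<ge> 0 \<Longrightarrow> bounded_linear (Tm1 t)" using ext by (simp add: extrapolation_def)
lemma Tm1_J: "t \<ge> 0 \<Longrightarrow> Tm1 t (J x) = J (T t x)" using ext by (simp add: extrapolation_def)

lemma J_bl: "bounded_linear J"
proof -
  obtain K where K: "\<And>x. norm (R x) \<le> norm x * K" using R_bl bounded_linear.bounded by blast
  show ?thesis
  proof (rule bounded_linear_intro)
    show "J (x + y) = J x + J y" for x y using J_lin by (simp add: linear_add)
    show "J (r *\<^sub>R x) = r *\<^sub>R J x" for r x using J_lin by (simp add: linear_scale)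
    show "norm (J x) \<le> norm x * K" for x using K J_norm by simp
  qed
qed

lemma gen_zero: "gen T 0 = 0"
proof -
  have "\<forall>\<^sub>F h in at_right 0. (1 / h) *\<^sub>R (T h 0 - 0) = 0"
    using eventually_at_right_less[of "0::real"]
  proof (rule eventually_mono)
    fix h :: real assume "0 < h"
    then show "(1 / h) *\<^sub>R (T h 0 - 0) = 0" using linear_simps(3)[OF T_bl[of h]] by simp
  qed
  then have "((\<lambda>h. (1 / h) *\<^sub>R (T h 0 - 0)) \<longlongrightarrow> 0) (at_right 0)"
    by (rule tendsto_eventually)
  then show ?thesis unfolding gen_def by (rule tendsto_Lim[OF trivial_limit_at_right_real])
qed

lemma Ix_lin: "linear Ix" using cx by (simp add: cplx_struct_def)

lemma R_zero_imp: "R x = 0 \<Longrightarrow> x = 0"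
  using R_prop[of x] linear_0[OF Ix_lin] by (simp add: cscale_def gen_zero)

lemma J_inj: "J x = J y \<Longrightarrow> x = y"
proof -
  assume "J x = J y"
  then have "J (x - y) = 0" using J_lin by (simp add: linear_diff)
  then have "R (x - y) = 0" using J_norm[of "x - y"] by simp
  then show "x = y" using R_zero_imp[of "x - y"] by simp
qed

lemma cscale_T: "t \<ge> 0 \<Longrightarrow> cscale Ix c (T t y) = T t (cscale Ix c y)"
  using T_bl[of t] T_I[of t]
  by (simp add: cscale_def linear_add linear_scale bounded_linear.linear)

lemma R_comm:
  assumes t: "t \<ge> 0"
  shows "R (T t x) = T t (R x)"
proof -
  define y where "y = R x"
  have yd: "y \<in> gen_dom T" and eq: "cscale Ix \<beta> y - gen T y = x" using R_prop[of x] by (auto simp: y_def)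
  obtain z where z: "((\<lambda>h. (1 / h) *\<^sub>R (T h y - y)) \<longlongrightarrow> z) (at_right 0)"
    using yd by (auto simp: gen_dom_def)
  have gy: "gen T y = z" unfolding gen_def by (rule tendsto_Lim[OF trivial_limit_at_right_real z])
  have lin: "linear (T t)" using T_bl[OF t] by (simp add: bounded_linear.linear)
  have l1: "((\<lambda>h. T t ((1 / h) *\<^sub>R (T h y - y))) \<longlongrightarrow> T t z) (at_right 0)"
    by (rule bounded_linear.tendsto[OF T_bl[OF t] z])
  have ev: "\<forall>\<^sub>F h in at_right 0. T t ((1 / h) *\<^sub>R (T h y - y)) = (1 / h) *\<^sub>R (T h (T t y) - T t y)"
    using eventually_at_right_less[of "0::real"]
  proof (rule eventually_mono)
    fix h :: real assume h: "0 < h"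
    have "T h (T t y) = T (h + t) y" using T_add[of h t y] h t by simp
    also have "\<dots> = T (t + h) y" by (simp add: add.commute)
    also have "\<dots> = T t (T h y)" using T_add[of t h y] h t by simp
    finally show "T t ((1 / h) *\<^sub>R (T h y - y)) = (1 / h) *\<^sub>R (T h (T t y) - T t y)"
      using lin by (simp add: linear_scale linear_diff)
  qed
  have l2: "((\<lambda>h. (1 / h) *\<^sub>R (T h (T t y) - T t y)) \<longlongrightarrow> T t z) (at_right 0)"
    using Lim_transform_eventually[OF l1 ev] .
  have d2: "T t y \<in> gen_dom T" using l2 by (auto simp: gen_dom_def)
  have g2: "gen T (T t y) = T t z" unfolding gen_def by (rule tendsto_Lim[OF trivial_limit_at_right_real l2])
  have "cscale Ix \<beta> (T t y) - gen T (T t y) = T t (cscale Ix \<beta> y - gen T y)"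
    using lin by (simp add: g2 gy cscale_T[OF t] linear_diff)
  also have "\<dots> = T t x" by (simp add: eq)
  finally have "T t y = R (T t x)" by (rule R_uniq[OF d2])
  then show ?thesis by (simp add: y_def)
qed

end

locale sgb = sg +
  fixes M :: real
  assumes M0: "M \<ge> 0" and Mb: "\<And>t x. t \<ge> 0 \<Longrightarrow> norm (T t x) \<le> M * norm x"
begin

lemma T_diff_bound:
  assumes "\<tau> \<ge> 0" "\<tau>' \<ge> 0"
  shows "norm (T \<tau>' x - T \<tau> x) \<le> M * norm (T \<bar>\<tau>' - \<tau>\<bar> x - x)"
proof (cases "\<tau> \<le> \<tau>'")
  case True
  define h where "h = \<tau>' - \<tau>"
  have h: "h \<ge> 0" "\<bar>\<tau>' - \<tau>\<bar> = h" using True by (auto simp: h_def)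
  have "T \<tau>' x = T \<tau> (T h x)" using T_add[of \<tau> h x] assms h by (simp add: h_def)
  then have "T \<tau>' x - T \<tau> x = T \<tau> (T h x - x)"
    using T_bl[OF assms(1)] by (simp add: linear_diff bounded_linear.linear)
  then show ?thesis using Mb[OF assms(1)] h by simp
next
  case False
  define h where "h = \<tau> - \<tau>'"
  have h: "h \<ge> 0" "\<bar>\<tau>' - \<tau>\<bar> = h" using False by (auto simp: h_def)
  have "T \<tau> x = T \<tau>' (T h x)" using T_add[of \<tau>' h x] assms h by (simp add: h_def)
  then have "T \<tau>' x - T \<tau> x = T \<tau>' (x - T h x)"
    using T_bl[OF assms(2)] by (simp add: linear_diff bounded_linear.linear)
  then show ?thesis using Mb[OF assms(2), of "x - T h x"] h by (simp add: norm_minus_commute)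
qed

lemma T_cont: "continuous_on {0..} (\<lambda>\<tau>. T \<tau> x)"
  unfolding continuous_on_iff
proof (intro ballI allI impI)
  fix \<tau> :: real and e :: real assume \<tau>: "\<tau> \<in> {0..}" and e: "e > 0"
  have "\<forall>\<^sub>F h in at_right 0. dist (T h x) x < e / (M + 1)"
    using T_lim[of x] e M0 by (simp add: tendsto_iff)
  then obtain b where b: "b > 0" "\<And>h. h > 0 \<Longrightarrow> h < b \<Longrightarrow> dist (T h x) x < e / (M + 1)"
    by (auto simp: eventually_at_right_field)
  show "\<exists>d>0. \<forall>\<tau>'\<in>{0..}. dist \<tau>' \<tau> < d \<longrightarrow> dist (T \<tau>' x) (T \<tau> x) < e"
  proof (intro exI[of _ b] conjI ballI impI)
    fix \<tau>' :: real assume \<tau>': "\<tau>' \<in> {0..}" and d: "dist \<tau>' \<tau> < b"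
    show "dist (T \<tau>' x) (T \<tau> x) < e"
    proof (cases "\<tau>' = \<tau>")
      case True then show ?thesis using e by simp
    next
      case False
      then have hp: "\<bar>\<tau>' - \<tau>\<bar> > 0" "\<bar>\<tau>' - \<tau>\<bar> < b" using d by (auto simp: dist_real_def)
      have "dist (T \<tau>' x) (T \<tau> x) \<le> M * norm (T \<bar>\<tau>' - \<tau>\<bar> x - x)"
        using T_diff_bound[of \<tau> \<tau>' x] \<tau> \<tau>' by (simp add: dist_norm)
      also have "\<dots> \<le> M * (e / (M + 1))"
        using b(2)[OF hp] M0 by (intro mult_left_mono) (auto simp: dist_norm)
      also have "\<dots> < e" using M0 e by (simp add: field_simps)
      finally show ?thesis .
    qed
  qed (use b in auto)
qed

lemma Tm1_bound:
  assumes t: "t \<ge> 0"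
  shows "norm (Tm1 t y) \<le> M * norm y"
proof -
  let ?A = "{y. norm (Tm1 t y) \<le> M * norm y}"
  have cl: "closed ?A"
    by (intro closed_Collect_le continuous_intros linear_continuous_on Tm1_bl[OF t])
  have "range J \<subseteq> ?A"
  proof
    fix y assume "y \<in> range J"
    then obtain x where x: "y = J x" by blast
    have "norm (Tm1 t (J x)) = norm (R (T t x))" by (simp add: Tm1_J[OF t] J_norm)
    also have "\<dots> = norm (T t (R x))" by (simp add: R_comm[OF t])
    also have "\<dots> \<le> M * norm (R x)" by (rule Mb[OF t])
    also have "\<dots> = M * norm (J x)" by (simp add: J_norm)
    finally show "y \<in> ?A" using x by simp
  qed
  then have "closure (range J) \<subseteq> ?A" using cl by (rule closure_minimal)
  then show ?thesis using J_dense by auto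
qed

lemma Tm1_cont: "continuous_on {0..} (\<lambda>\<tau>. Tm1 \<tau> y)"
  unfolding continuous_on_iff
proof (intro ballI allI impI)
  fix \<tau> :: real and e :: real assume \<tau>: "\<tau> \<in> {0..}" and e: "e > 0"
  obtain KJ where KJ: "KJ > 0" "\<And>x. norm (J x) \<le> norm x * KJ"
    using bounded_linear.pos_bounded[OF J_bl] by blast
  define \<delta> where "\<delta> = e / (3 * (M + 1))"
  have \<delta>: "\<delta> > 0" using e M0 by (simp add: \<delta>_def)
  have "y \<in> closure (range J)" using J_dense by simp
  then obtain x where x: "dist (J x) y < \<delta>" using \<delta> by (auto simp: closure_approachable)
  obtain d where d: "d > 0" "\<And>\<tau>'. \<tau>' \<in> {0..} \<Longrightarrow> dist \<tau>' \<tau> < d \<Longrightarrow> dist (T \<tau>' x) (T \<tau> x) < e / (3 * KJ)"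
    using T_cont[of x, unfolded continuous_on_iff, rule_format, OF \<tau>, of "e / (3 * KJ)"] e KJ by auto
  show "\<exists>d>0. \<forall>\<tau>'\<in>{0..}. dist \<tau>' \<tau> < d \<longrightarrow> dist (Tm1 \<tau>' y) (Tm1 \<tau> y) < e"
  proof (intro exI[of _ d] conjI ballI impI)
    show "d > 0" by (rule d(1))
    fix \<tau>' assume \<tau>': "\<tau>' \<in> {0..}" and dd: "dist \<tau>' \<tau> < d"
    have t0: "\<tau> \<ge> 0" "\<tau>' \<ge> 0" using \<tau> \<tau>' by auto
    have l1: "linear (Tm1 \<tau>')" "linear (Tm1 \<tau>)" using Tm1_bl t0 by (auto simp: bounded_linear.linear)
    have decomp: "Tm1 \<tau>' y - Tm1 \<tau> y = Tm1 \<tau>' (y - J x) + J (T \<tau>' x - T \<tau> x) + Tm1 \<tau> (J x - y)"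
      using l1 J_lin by (simp add: linear_diff Tm1_J t0)
    have a: "norm (Tm1 \<tau>' (y - J x)) \<le> M * \<delta>"
      using Tm1_bound[OF t0(2), of "y - J x"] x M0
      by (smt (verit) dist_norm mult_left_mono norm_minus_commute)
    have b: "norm (Tm1 \<tau> (J x - y)) \<le> M * \<delta>"
      using Tm1_bound[OF t0(1), of "J x - y"] x M0
      by (smt (verit) dist_norm mult_left_mono)
    have c: "norm (J (T \<tau>' x - T \<tau> x)) < e / 3"
    proof -
      have "norm (J (T \<tau>' x - T \<tau> x)) \<le> norm (T \<tau>' x - T \<tau> x) * KJ" by (rule KJ(2))
      also have "\<dots> < (e / (3 * KJ)) * KJ"
        using d(2)[OF \<tau>' dd] KJ(1) by (intro mult_strict_right_mono) (auto simp: dist_norm)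
      also have "\<dots> = e / 3" using KJ(1) by simp
      finally show ?thesis .
    qed
    have "M * \<delta> \<le> e / 3"
      using M0 e by (simp add: \<delta>_def field_simps)
    moreover have "norm (Tm1 \<tau>' y - Tm1 \<tau> y) = norm (Tm1 \<tau>' (y - J x) + J (T \<tau>' x - T \<tau> x) + Tm1 \<tau> (J x - y))"
      by (simp only: decomp)
    ultimately have "norm (Tm1 \<tau>' y - Tm1 \<tau> y) < e"
      using a b c norm_triangle_ineq[of "Tm1 \<tau>' (y - J x) + J (T \<tau>' x - T \<tau> x)" "Tm1 \<tau> (J x - y)"]
        norm_triangle_ineq[of "Tm1 \<tau>' (y - J x)" "J (T \<tau>' x - T \<tau> x)"]
      by linarith
    then show "dist (Tm1 \<tau>' y) (Tm1 \<tau> y) < e" by (simp add: dist_norm)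
  qed
qed

lemma Tm1_cont2:
  assumes "t \<ge> 0"
  shows "continuous_on {0..t} (\<lambda>s. Tm1 (t - s) y)"
proof -
  have sub: "(\<lambda>s. t - s) ` {0..t} \<subseteq> {0..}" by auto
  have c: "continuous_on {0..t} (\<lambda>s. t - s)" by (intro continuous_intros)
  show ?thesis using continuous_on_compose2[OF Tm1_cont c sub] by simp
qed

end

context sg begin

lemma zero_input_bound:
  assumes KL: "classKL b0"
    and H: "\<And>t x0. t \<ge> 0 \<Longrightarrow> \<exists>\<xi>. J \<xi> = Tm1 t (J x0) \<and> norm \<xi> \<le> b0 (norm x0) t"
  shows "\<exists>M\<ge>0. \<forall>t x. t \<ge> 0 \<longrightarrow> norm (T t x) \<le> M * norm x"
proof -
  have b1: "norm (T t x) \<le> b0 (norm x) t" if t: "t \<ge> 0" for t x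
  proof -
    obtain \<xi> where \<xi>: "J \<xi> = Tm1 t (J x0)" "norm \<xi> \<le> b0 (norm x0) t" if "x0 = x" for x0
      using H[OF t, of x] by blast
    have "\<xi> = T t x" using \<xi>(1)[OF refl] by (simp add: Tm1_J[OF t] J_inj)
    then show ?thesis using \<xi>(2)[OF refl] by simp
  qed
  have Kt: "classK (\<lambda>s. b0 s 0)" using KL by (simp add: classKL_def)
  have dec: "b0 s t \<le> b0 s 0" if "s > 0" "t \<ge> 0" for s t
  proof (cases "t = 0")
    case False
    then have "t > 0" using that by simp
    have "classL (\<lambda>t. b0 s t)" using KL that by (simp add: classKL_def)
    then show ?thesis using \<open>t > 0\<close> unfolding classL_def by (meson less_imp_le order_refl)
  qed simp
  define M where "M = b0 1 0"
  have M0: "M \<ge> 0" unfolding M_def using classK_nonneg[OF Kt, of 1] by simp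
  show ?thesis
  proof (intro exI[of _ M] conjI allI impI M0)
    fix t :: real and x assume t: "t \<ge> 0"
    show "norm (T t x) \<le> M * norm x"
    proof (cases "x = 0")
      case True
      then show ?thesis using T_bl[OF t] by (simp add: linear_simps(3) bounded_linear.linear)
    next
      case False
      define x1 where "x1 = (1 / norm x) *\<^sub>R x"
      have n1: "norm x1 = 1" using False by (simp add: x1_def)
      have "x = norm x *\<^sub>R x1" using False by (simp add: x1_def)
      then have "T t x = norm x *\<^sub>R T t x1"
        using T_bl[OF t] by (metis bounded_linear.linear linear_scale)
      then have "norm (T t x) = norm x * norm (T t x1)" by simp
      also have "\<dots> \<le> norm x * M"
      proof (intro mult_left_mono)
        have "norm (T t x1) \<le> b0 1 t" using b1[OF t, of x1] n1 by simp
        also have "\<dots> \<le> b0 1 0" using dec[of 1 t] t by simp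
        finally show "norm (T t x1) \<le> M" by (simp add: M_def)
      qed simp
      finally show ?thesis by (simp add: mult.commute)
    qed
  qed
qed

end


lemma meas_on_comp:
  assumes "continuous_on UNIV L" "meas_on t u"
  shows "meas_on t (\<lambda>s. L (u s))"
  using assms unfolding meas_on_def by (rule borel_measurable_continuous_on)

lemma meas_on_blin:
  assumes "bounded_linear L" "meas_on t u"
  shows "meas_on t (\<lambda>s. L (u s))"
  using linear_continuous_on[OF assms(1)] assms(2) by (rule meas_on_comp)

lemma meas_ind:
  assumes "f \<in> borel_measurable (restrict_space lebesgue {0..t::real})"
  shows "(\<lambda>s. f s * indicator {0..t} s :: ennreal) \<in> borel_measurable lebesgue"
  using assms by (subst borel_measurable_restrict_space_iff_ennreal[symmetric]) auto

lemma Inf_scale_le: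
  fixes Su Sv :: "real set"
  assumes ne: "Su \<noteq> {}" and bdd: "bdd_below Sv" and C: "C > 0"
    and sub: "\<And>k. k \<in> Su \<Longrightarrow> C * k \<in> Sv"
  shows "Inf Sv \<le> C * Inf Su"
proof -
  have "Inf Sv / C \<le> Inf Su"
  proof (rule cInf_greatest[OF ne])
    fix k assume "k \<in> Su"
    then have "Inf Sv \<le> C * k" using cInf_lower[OF sub bdd] by blast
    then show "Inf Sv / C \<le> k" using C by (simp add: pos_divide_le_eq mult.commute)
  qed
  then show ?thesis using C by (simp add: pos_divide_le_eq mult.commute)
qed

lemma Young_0:
  assumes "Young \<Phi>"
  shows "\<Phi> 0 = 0"
proof -
  have c: "continuous_on {0..} \<Phi>" and q: "((\<lambda>x. \<Phi> x / x) \<longlongrightarrow> 0) (at_right 0)"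
    using assms by (auto simp: Young_def)
  have "(\<Phi> \<longlongrightarrow> \<Phi> 0) (at 0 within {0..})"
    using c by (simp add: continuous_on_def)
  then have 1: "(\<Phi> \<longlongrightarrow> \<Phi> 0) (at_right 0)"
    by (rule tendsto_within_subset) auto
  have "((\<lambda>x. x * (\<Phi> x / x)) \<longlongrightarrow> 0 * 0) (at_right (0::real))"
    by (intro tendsto_mult q tendsto_ident_at)
  moreover have "\<forall>\<^sub>F x in at_right 0. x * (\<Phi> x / x) = \<Phi> x"
    using eventually_at_right_less[of "0::real"] by (rule eventually_mono) simp
  ultimately have 2: "(\<Phi> \<longlongrightarrow> 0) (at_right 0)"
    using Lim_transform_eventually by fastforce
  show ?thesis using tendsto_unique[OF trivial_limit_at_right_real 1 2] .
qed

lemma subset_UNIV_max: "(\<lambda>x::real. max 0 x) ` UNIV \<subseteq> {0..}" by auto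

lemma Young_cont_ext:
  assumes "Young \<Phi>"
  shows "continuous_on UNIV (\<lambda>x. \<Phi> (max 0 x))"
proof -
  have "continuous_on {0..} \<Phi>" using assms by (simp add: Young_def)
  then show ?thesis
    by (rule continuous_on_compose2[OF _ _ subset_UNIV_max]) (auto intro: continuous_intros)
qed

lemma Young_mono:
  assumes "Young \<Phi>" "0 \<le> x" "x \<le> y"
  shows "\<Phi> x \<le> \<Phi> y"
proof -
  have "mono_on {0..} \<Phi>" using assms(1) unfolding Young_def by blast
  then show ?thesis using assms(2,3) by (metis atLeast_iff mono_onD order_trans)
qed

lemma Young_superlin:
  assumes "Young \<Phi>"
  shows "\<exists>R>0. \<forall>x\<ge>0. x \<le> R + \<Phi> x"
proof -
  have "filterlim (\<lambda>x. \<Phi> x / x) at_top at_top" using assms by (simp add: Young_def)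
  then have "eventually (\<lambda>x. \<Phi> x / x \<ge> 1) at_top" by (simp add: filterlim_at_top)
  then obtain N where N: "\<And>x. x \<ge> N \<Longrightarrow> \<Phi> x / x \<ge> 1" by (auto simp: eventually_at_top_linorder)
  define R where "R = max N 1"
  have nn: "\<And>x. x \<ge> 0 \<Longrightarrow> \<Phi> x \<ge> 0" using assms by (simp add: Young_def)
  show ?thesis
  proof (intro exI[of _ R] conjI allI impI)
    show "R > 0" by (simp add: R_def)
    fix x :: real assume x: "x \<ge> 0"
    show "x \<le> R + \<Phi> x"
    proof (cases "x \<ge> R")
      case True
      then have "x > 0" "x \<ge> N" by (auto simp: R_def)
      then have "\<Phi> x / x \<ge> 1" using N by blast
      then have "\<Phi> x \<ge> x" using \<open>x>0\<close> by (simp add: le_divide_eq)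
      then show ?thesis using \<open>R>0\<close> by linarith
    next
      case False then show ?thesis using nn[OF x] by linarith
    qed
  qed
qed

lemma Linf_dom:
  fixes u :: "real \<Rightarrow> 'a::real_normed_vector" and v :: "real \<Rightarrow> 'b::real_normed_vector"
  assumes C: "C > 0" and dom: "\<And>s. norm (v s) \<le> C * norm (u s)" and mv: "meas_on t v"
    and u: "Linf_mem t u"
  shows "Linf_mem t v \<and> Linf_norm t v \<le> C * Linf_norm t u"
proof -
  obtain D where D: "AE s in lebesgue. s \<in> {0..t} \<longrightarrow> norm (u s) \<le> D" using u by (auto simp: Linf_mem_def)
  let ?Su = "{D. 0 \<le> D \<and> (AE s in lebesgue. s \<in> {0..t} \<longrightarrow> norm (u s) \<le> D)}"
  let ?Sv = "{D. 0 \<le> D \<and> (AE s in lebesgue. s \<in> {0..t} \<longrightarrow> norm (v s) \<le> D)}"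
  have sub: "C * D \<in> ?Sv" if "D \<in> ?Su" for D
  proof -
    from that have "0 \<le> D" and ae: "AE s in lebesgue. s \<in> {0..t} \<longrightarrow> norm (u s) \<le> D" by auto
    have "AE s in lebesgue. s \<in> {0..t} \<longrightarrow> norm (v s) \<le> C * D"
      using ae
    proof (rule AE_mp, intro AE_I2 impI)
      fix s assume "s \<in> {0..t} \<longrightarrow> norm (u s) \<le> D" "s \<in> {0..t}"
      then have "norm (u s) \<le> D" by blast
      then have "C * norm (u s) \<le> C * D" using C by (simp add: mult_left_mono)
      then show "norm (v s) \<le> C * D" using dom[of s] by linarith
    qed
    then show ?thesis using \<open>0 \<le> D\<close> C by simp
  qed
  have "AE s in lebesgue. s \<in> {0..t} \<longrightarrow> norm (u s) \<le> max D 0"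
    by (rule AE_mp[OF D]) (rule AE_I2, auto)
  then have ne: "max D 0 \<in> ?Su" by simp
  have memv: "Linf_mem t v" using sub[OF ne] mv by (auto simp: Linf_mem_def)
  have bdd: "bdd_below ?Sv" by (auto intro: bdd_belowI[of _ 0])
  have "Inf ?Sv \<le> C * Inf ?Su"
    by (rule Inf_scale_le[OF _ bdd C sub]) (use ne in blast)
  then show ?thesis using memv by (simp add: Linf_norm_def)
qed

lemma L1_dom:
  fixes u :: "real \<Rightarrow> 'a::real_normed_vector" and v :: "real \<Rightarrow> 'b::real_normed_vector"
  assumes C: "C > 0" and dom: "\<And>s. norm (v s) \<le> C * norm (u s)" and mv: "meas_on t v"
    and u: "L1_mem t u"
  shows "L1_mem t v \<and> L1_norm t v \<le> C * L1_norm t u"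
proof -
  let ?I = "\<integral>\<^sup>+ s. ennreal (norm (u s)) * indicator {0..t} s \<partial>lebesgue"
  have um: "u \<in> borel_measurable (restrict_space lebesgue {0..t})" using u by (simp add: L1_mem_def meas_on_def)
  have m: "(\<lambda>s. ennreal (norm (u s)) * indicator {0..t} s) \<in> borel_measurable lebesgue"
    by (rule meas_ind) (use um in measurable)
  have fin: "?I < \<infinity>" using u by (simp add: L1_mem_def)
  have "(\<integral>\<^sup>+ s. ennreal (norm (v s)) * indicator {0..t} s \<partial>lebesgue)
        \<le> (\<integral>\<^sup>+ s. ennreal C * (ennreal (norm (u s)) * indicator {0..t} s) \<partial>lebesgue)"
  proof (intro nn_integral_mono)
    fix s
    have "ennreal (norm (v s)) \<le> ennreal (C * norm (u s))" using dom[of s] by (rule ennreal_leI)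
    also have "\<dots> = ennreal C * ennreal (norm (u s))" using C by (simp add: ennreal_mult)
    finally show "ennreal (norm (v s)) * indicator {0..t} s \<le> ennreal C * (ennreal (norm (u s)) * indicator {0..t} s)"
      by (auto split: split_indicator)
  qed
  also have "\<dots> = ennreal C * ?I" by (rule nn_integral_cmult[OF m])
  finally have le: "(\<integral>\<^sup>+ s. ennreal (norm (v s)) * indicator {0..t} s \<partial>lebesgue) \<le> ennreal C * ?I" .
  have fin2: "ennreal C * ?I < \<infinity>" using fin by (simp add: ennreal_mult_less_top)
  have "L1_mem t v" using le fin2 mv by (auto simp: L1_mem_def)
  moreover have "L1_norm t v \<le> C * L1_norm t u"
    unfolding L1_norm_def using enn2real_mono[OF le] fin2 C
    by (simp add: enn2real_mult)
  ultimately show ?thesis by blast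
qed

lemma orlicz_dom:
  assumes Y: "Young \<Phi>" and C: "C > 0" and dom: "\<And>s. norm (v s) \<le> C * norm (u s)"
    and ok: "orlicz_ok \<Phi> t u k"
  shows "orlicz_ok \<Phi> t v (C * k)"
proof -
  have k: "k > 0" using ok by (simp add: orlicz_ok_def)
  have "(\<integral>\<^sup>+ s. ennreal (\<Phi> (norm (v s) / (C * k))) * indicator {0..t} s \<partial>lebesgue)
      \<le> (\<integral>\<^sup>+ s. ennreal (\<Phi> (norm (u s) / k)) * indicator {0..t} s \<partial>lebesgue)"
  proof (intro nn_integral_mono)
    fix s
    have "norm (v s) / (C * k) \<le> C * norm (u s) / (C * k)"
      using dom[of s] C k by (intro divide_right_mono) auto
    also have "\<dots> = norm (u s) / k" using C by simp
    finally have "\<Phi> (norm (v s) / (C * k)) \<le> \<Phi> (norm (u s) / k)"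
      using C k by (intro Young_mono[OF Y]) auto
    then show "ennreal (\<Phi> (norm (v s) / (C * k))) * indicator {0..t} s \<le> ennreal (\<Phi> (norm (u s) / k)) * indicator {0..t} s"
      by (auto split: split_indicator intro: ennreal_leI)
  qed
  also have "\<dots> \<le> 1" using ok by (simp add: orlicz_ok_def)
  finally show ?thesis using C k by (simp add: orlicz_ok_def)
qed

lemma LPhi_dom:
  assumes Y: "Young \<Phi>" and C: "C > 0" and dom: "\<And>s. norm (v s) \<le> C * norm (u s)" and mv: "meas_on t v"
    and u: "LPhi_mem \<Phi> t u"
  shows "LPhi_mem \<Phi> t v \<and> LPhi_norm \<Phi> t v \<le> C * LPhi_norm \<Phi> t u"
proof -
  obtain k where k: "orlicz_ok \<Phi> t u k" using u by (auto simp: LPhi_mem_def)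
  have memv: "LPhi_mem \<Phi> t v" using orlicz_dom[OF Y C dom k] mv by (auto simp: LPhi_mem_def)
  have "Inf {k. orlicz_ok \<Phi> t v k} \<le> C * Inf {k. orlicz_ok \<Phi> t u k}"
  proof (rule Inf_scale_le[OF _ _ C])
    show "{k. orlicz_ok \<Phi> t u k} \<noteq> {}" using k by blast
    show "bdd_below {k. orlicz_ok \<Phi> t v k}" by (rule bdd_belowI[of _ 0]) (simp add: orlicz_ok_def)
    show "C * k \<in> {k. orlicz_ok \<Phi> t v k}" if "k \<in> {k. orlicz_ok \<Phi> t u k}" for k
      using orlicz_dom[where v=v and u=u, OF Y C dom] that by blast
  qed
  then show ?thesis using memv by (simp add: LPhi_norm_def)
qed

lemma EPhi_comp:
  fixes L :: "'a::real_normed_vector \<Rightarrow> 'b::real_normed_vector"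
  assumes Y: "Young \<Phi>" and L: "bounded_linear L" and C: "C > 0" and LC: "\<And>x. norm (L x) \<le> C * norm x"
    and u: "EPhi_mem \<Phi> t u"
  shows "EPhi_mem \<Phi> t (\<lambda>s. L (u s)) \<and> LPhi_norm \<Phi> t (\<lambda>s. L (u s)) \<le> C * LPhi_norm \<Phi> t u"
proof -
  have uL: "LPhi_mem \<Phi> t u" using u by (simp add: EPhi_mem_def)
  have mu: "meas_on t u" using uL by (simp add: LPhi_mem_def)
  have main: "LPhi_mem \<Phi> t (\<lambda>s. L (u s)) \<and> LPhi_norm \<Phi> t (\<lambda>s. L (u s)) \<le> C * LPhi_norm \<Phi> t u"
    by (rule LPhi_dom[OF Y C LC meas_on_blin[OF L mu] uL])
  have "\<exists>w. Linf_mem t w \<and> LPhi_mem \<Phi> t (\<lambda>s. L (u s) - w s) \<and> LPhi_norm \<Phi> t (\<lambda>s. L (u s) - w s) < \<epsilon>"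
    if e: "\<epsilon> > 0" for \<epsilon>
  proof -
    obtain v where v: "Linf_mem t v" "LPhi_mem \<Phi> t (\<lambda>s. u s - v s)" "LPhi_norm \<Phi> t (\<lambda>s. u s - v s) < \<epsilon> / C"
      using u e C unfolding EPhi_mem_def by (meson divide_pos_pos)
    have mv: "meas_on t v" using v(1) by (simp add: Linf_mem_def)
    have eq: "(\<lambda>s. L (u s) - L (v s)) = (\<lambda>s. L (u s - v s))"
      using L by (simp add: linear_diff bounded_linear.linear)
    have mdiff: "meas_on t (\<lambda>s. u s - v s)" using v(2) by (simp add: LPhi_mem_def)
    have d: "LPhi_mem \<Phi> t (\<lambda>s. L (u s - v s)) \<and> LPhi_norm \<Phi> t (\<lambda>s. L (u s - v s)) \<le> C * LPhi_norm \<Phi> t (\<lambda>s. u s - v s)"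
      by (rule LPhi_dom[OF Y C LC meas_on_blin[OF L mdiff] v(2)])
    have "C * LPhi_norm \<Phi> t (\<lambda>s. u s - v s) < \<epsilon>" using v(3) C by (simp add: pos_less_divide_eq mult.commute)
    then show ?thesis
      using d Linf_dom[OF C LC meas_on_blin[OF L mv] v(1)]
      by (intro exI[of _ "\<lambda>s. L (v s)"]) (auto simp: eq)
  qed
  then show ?thesis using main by (simp add: EPhi_mem_def)
qed

definition Zok :: "Zspace \<Rightarrow> bool" where
  "Zok Z \<longleftrightarrow> (\<exists>\<Phi>. Young \<Phi> \<and> Z = EPhi \<Phi>) \<or> Z = L1 \<or> Z = Linfty"

lemma Z_comp:
  fixes L :: "'a::real_normed_vector \<Rightarrow> 'b::real_normed_vector"
  assumes Z: "Zok Z" and L: "bounded_linear L" and C: "C > 0" and LC: "\<And>x. norm (L x) \<le> C * norm x"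
    and u: "Z_mem Z t u"
  shows "Z_mem Z t (\<lambda>s. L (u s)) \<and> Z_norm Z t (\<lambda>s. L (u s)) \<le> C * Z_norm Z t u"
  using Z unfolding Zok_def
proof (elim disjE exE conjE)
  fix \<Phi> assume Y: "Young \<Phi>" and "Z = EPhi \<Phi>"
  then show ?thesis using EPhi_comp[OF Y L C LC] u by simp
next
  assume "Z = L1"
  then show ?thesis using L1_dom[OF C LC meas_on_blin[OF L]] u by (simp add: L1_mem_def)
next
  assume "Z = Linfty"
  then show ?thesis using Linf_dom[OF C LC meas_on_blin[OF L]] u by (simp add: Linf_mem_def)
qed

lemma Z_nonneg:
  assumes Z: "Zok Z" and u: "Z_mem Z t u"
  shows "0 \<le> Z_norm Z t u"
  using Z unfolding Zok_def
proof (elim disjE exE conjE)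
  fix \<Phi> assume "Z = EPhi \<Phi>"
  then obtain k where "orlicz_ok \<Phi> t u k" using u by (auto simp: EPhi_mem_def LPhi_mem_def)
  then show ?thesis using \<open>Z = EPhi \<Phi>\<close>
    by (auto simp: LPhi_norm_def orlicz_ok_def intro!: cInf_greatest)
next
  assume "Z = L1" then show ?thesis by (simp add: L1_norm_def)
next
  assume "Z = Linfty"
  then obtain D where D: "AE s in lebesgue. s \<in> {0..t} \<longrightarrow> norm (u s) \<le> D" using u by (auto simp: Linf_mem_def)
  have "AE s in lebesgue. s \<in> {0..t} \<longrightarrow> norm (u s) \<le> max D 0"
    by (rule AE_mp[OF D]) (rule AE_I2, auto)
  then have "max D 0 \<in> {C. 0 \<le> C \<and> (AE s in lebesgue. s \<in> {0..t} \<longrightarrow> norm (u s) \<le> C)}"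
    by simp
  then show ?thesis using \<open>Z = Linfty\<close> by (auto simp: Linf_norm_def intro!: cInf_greatest)
qed

lemma Z_zero:
  assumes Z: "Zok Z"
  shows "Z_mem Z t (\<lambda>s. 0::'a::real_normed_vector) \<and> Z_norm Z t (\<lambda>s. 0::'a) = 0"
proof -
  have m: "meas_on t (\<lambda>s. 0::'a)" unfolding meas_on_def by (rule borel_measurable_const)
  have set0: "{C. 0 \<le> C \<and> (AE s in lebesgue. s \<in> {0..t} \<longrightarrow> norm (0::'a) \<le> C)} = {0..}"
    by auto
  have li: "Linf_mem t (\<lambda>s. 0::'a) \<and> Linf_norm t (\<lambda>s. 0::'a) = 0"
    unfolding Linf_mem_def Linf_norm_def set0 using m by auto
  have int0: "(\<integral>\<^sup>+ s. ennreal (norm (0::'a)) * indicator {0..t} s \<partial>lebesgue) = 0" by simp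
  show ?thesis
    using Z unfolding Zok_def
  proof (elim disjE exE conjE)
    fix \<Phi> assume Y: "Young \<Phi>" and ZE: "Z = EPhi \<Phi>"
    have int1: "(\<integral>\<^sup>+ s. ennreal (\<Phi> (norm (0::'a) / k)) * indicator {0..t} s \<partial>lebesgue) = 0" for k
      by (simp add: Young_0[OF Y])
    have ok: "orlicz_ok \<Phi> t (\<lambda>s. 0::'a) k \<longleftrightarrow> 0 < k" for k
      unfolding orlicz_ok_def int1 by simp
    have gt: "{k::real. 0 < k} = {0<..}" by auto
    have n0: "LPhi_norm \<Phi> t (\<lambda>s. 0::'a) = 0"
      unfolding LPhi_norm_def ok gt by (rule cInf_greaterThan)
    have lm: "LPhi_mem \<Phi> t (\<lambda>s. 0::'a)" unfolding LPhi_mem_def ok using m zero_less_one by blast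
    have "EPhi_mem \<Phi> t (\<lambda>s. 0::'a)"
      unfolding EPhi_mem_def
    proof (intro conjI allI impI lm)
      fix e :: real assume "e > 0"
      then have "Linf_mem t (\<lambda>s. 0::'a) \<and> LPhi_mem \<Phi> t (\<lambda>s. (0::'a) - (\<lambda>s. 0::'a) s) \<and> LPhi_norm \<Phi> t (\<lambda>s. (0::'a) - (\<lambda>s. 0::'a) s) < e"
        using lm n0 li by simp
      then show "\<exists>v::real\<Rightarrow>'a. Linf_mem t v \<and> LPhi_mem \<Phi> t (\<lambda>s. 0 - v s) \<and> LPhi_norm \<Phi> t (\<lambda>s. 0 - v s) < e"
        by blast
    qed
    then show ?thesis using ZE n0 by simp
  next
    assume "Z = L1"
    have int0': "(\<integral>\<^sup>+ s. ennreal (norm ((\<lambda>s. 0::'a) s)) * indicator {0..t} s \<partial>lebesgue) = 0"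
      using int0 by simp
    have "L1_mem t (\<lambda>s. 0::'a)" unfolding L1_mem_def int0' using m by simp
    moreover have "L1_norm t (\<lambda>s. 0::'a) = 0" unfolding L1_norm_def int0' by simp
    ultimately show ?thesis using \<open>Z = L1\<close> by simp
  next
    assume "Z = Linfty" then show ?thesis using li by simp
  qed
qed

lemma Z_L1:
  assumes Z: "Zok Z" and u: "Z_mem Z t u"
  shows "L1_mem t u"
  using Z unfolding Zok_def
proof (elim disjE exE conjE)
  fix \<Phi> assume Y: "Young \<Phi>" and ZE: "Z = EPhi \<Phi>"
  then have uL: "LPhi_mem \<Phi> t u" using u by (simp add: EPhi_mem_def)
  then obtain k where k: "orlicz_ok \<Phi> t u k" and mu: "meas_on t u" by (auto simp: LPhi_mem_def)
  have k0: "k > 0" using k unfolding orlicz_ok_def by blast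
  obtain R where R: "R > 0" "\<And>x. x \<ge> 0 \<Longrightarrow> x \<le> R + \<Phi> x" using Young_superlin[OF Y] by blast
  have um: "u \<in> borel_measurable (restrict_space lebesgue {0..t})" using mu by (simp add: meas_on_def)
  have pc: "\<Phi> (norm (u s) / k) = \<Phi> (max 0 (norm (u s) / k))" for s using k0 by simp
  have mphi: "(\<lambda>s. ennreal (\<Phi> (norm (u s) / k))) \<in> borel_measurable (restrict_space lebesgue {0..t})"
  proof -
    have "(\<lambda>s. \<Phi> (max 0 (norm (u s) / k))) \<in> borel_measurable (restrict_space lebesgue {0..t})"
      by (rule borel_measurable_continuous_on[OF Young_cont_ext[OF Y]]) (use um in measurable)
    then show ?thesis unfolding pc by measurable
  qed
  have "(\<integral>\<^sup>+ s. ennreal (norm (u s)) * indicator {0..t} s \<partial>lebesgue)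
     \<le> (\<integral>\<^sup>+ s. ennreal (k * R) * indicator {0..t} s + ennreal k * (ennreal (\<Phi> (norm (u s) / k)) * indicator {0..t} s) \<partial>lebesgue)"
  proof (intro nn_integral_mono)
    fix s
    have "norm (u s) / k \<le> R + \<Phi> (norm (u s) / k)" using R(2) k0 by simp
    then have "norm (u s) \<le> k * R + k * \<Phi> (norm (u s) / k)"
      using k0 by (simp add: divide_le_eq algebra_simps)
    then have "ennreal (norm (u s)) \<le> ennreal (k * R + k * \<Phi> (norm (u s) / k))"
      by (rule ennreal_leI)
    also have "\<dots> = ennreal (k * R) + ennreal k * ennreal (\<Phi> (norm (u s) / k))"
    proof -
      have "0 \<le> \<Phi> (norm (u s) / k)" using Y k0 by (simp add: Young_def)
      then show ?thesis using k0 R(1) by (simp add: ennreal_plus ennreal_mult)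
    qed
    finally have "ennreal (norm (u s)) \<le> ennreal (k * R) + ennreal k * ennreal (\<Phi> (norm (u s) / k))" .
    then show "ennreal (norm (u s)) * indicator {0..t} s \<le> ennreal (k * R) * indicator {0..t} s + ennreal k * (ennreal (\<Phi> (norm (u s) / k)) * indicator {0..t} s)"
      by (cases "s \<in> {0..t}") simp_all
  qed
  also have "\<dots> = (\<integral>\<^sup>+ s. ennreal (k * R) * indicator {0..t} s \<partial>lebesgue) + ennreal k * (\<integral>\<^sup>+ s. ennreal (\<Phi> (norm (u s) / k)) * indicator {0..t} s \<partial>lebesgue)"
  proof -
    have m1: "(\<lambda>s. ennreal (k * R) * indicator {0..t} s) \<in> borel_measurable lebesgue"
      by (intro meas_ind borel_measurable_const)
    have m0: "(\<lambda>s. ennreal (\<Phi> (norm (u s) / k)) * indicator {0..t} s) \<in> borel_measurable lebesgue"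
      by (rule meas_ind[OF mphi])
    have m2: "(\<lambda>s. ennreal k * (ennreal (\<Phi> (norm (u s) / k)) * indicator {0..t} s)) \<in> borel_measurable lebesgue"
      by (rule borel_measurable_times_ennreal[OF borel_measurable_const m0])
    show ?thesis by (simp only: nn_integral_add[OF m1 m2] nn_integral_cmult[OF m0])
  qed
  also have "\<dots> < \<infinity>"
  proof -
    have "(\<integral>\<^sup>+ s. ennreal (k * R) * indicator {0..t} s \<partial>lebesgue) = ennreal (k*R) * emeasure lebesgue {0..t}"
      by (simp add: nn_integral_cmult_indicator)
    also have "\<dots> < \<infinity>" by (simp add: ennreal_mult_less_top emeasure_lborel_Icc_eq)
    finally have 1: "(\<integral>\<^sup>+ s. ennreal (k * R) * indicator {0..t} s \<partial>lebesgue) < \<infinity>" .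
    have "(\<integral>\<^sup>+ s. ennreal (\<Phi> (norm (u s) / k)) * indicator {0..t} s \<partial>lebesgue) \<le> 1"
      using k by (simp add: orlicz_ok_def)
    then have "ennreal k * (\<integral>\<^sup>+ s. ennreal (\<Phi> (norm (u s) / k)) * indicator {0..t} s \<partial>lebesgue) < \<infinity>"
      by (simp add: ennreal_mult_less_top le_less_trans[OF _ ennreal_one_less_top])
    then show ?thesis using 1 by (simp add: ennreal_add_less_top)
  qed
  finally show ?thesis using mu by (simp add: L1_mem_def)
next
  assume "Z = L1" then show ?thesis using u by simp
next
  assume ZL: "Z = Linfty"
  then obtain D where D: "AE s in lebesgue. s \<in> {0..t} \<longrightarrow> norm (u s) \<le> D" and mu: "meas_on t u"
    using u by (auto simp: Linf_mem_def)
  have "(\<integral>\<^sup>+ s. ennreal (norm (u s)) * indicator {0..t} s \<partial>lebesgue) \<le> (\<integral>\<^sup>+ s. ennreal (max D 0) * indicator {0..t} s \<partial>lebesgue)"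
    using D
  proof (intro nn_integral_mono_AE, elim AE_mp, intro AE_I2 impI)
    fix s assume h: "s \<in> {0..t} \<longrightarrow> norm (u s) \<le> D"
    show "ennreal (norm (u s)) * indicator {0..t} s \<le> ennreal (max D 0) * indicator {0..t} s"
    proof (cases "s \<in> {0..t}")
      case True
      then have "norm (u s) \<le> max D 0" using h by auto
      then show ?thesis using True by (auto intro: ennreal_leI)
    qed simp
  qed
  also have "\<dots> = ennreal (max D 0) * emeasure lebesgue {0..t}"
    by (simp add: nn_integral_cmult_indicator)
  also have "\<dots> < \<infinity>" by (simp add: ennreal_mult_less_top emeasure_lborel_Icc_eq)
  finally show ?thesis using mu by (simp add: L1_mem_def)
qed

lemma L1_abs_int:
  fixes w :: "real \<Rightarrow> real"
  assumes "L1_mem t w"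
  shows "w absolutely_integrable_on {0..t}"
proof -
  have wm: "w \<in> borel_measurable (restrict_space lebesgue {0..t})" using assms by (simp add: L1_mem_def meas_on_def)
  have m: "(\<lambda>x. indicator {0..t} x *\<^sub>R w x) \<in> borel_measurable lebesgue"
    using wm by (subst borel_measurable_restrict_space_iff[symmetric]) auto
  have "(\<integral>\<^sup>+ x. ennreal (norm (indicator {0..t} x *\<^sub>R w x)) \<partial>lebesgue) = (\<integral>\<^sup>+ s. ennreal (norm (w s)) * indicator {0..t} s \<partial>lebesgue)"
    by (intro nn_integral_cong) (auto split: split_indicator)
  also have "\<dots> < \<infinity>" using assms by (simp add: L1_mem_def)
  finally show ?thesis using m
    by (simp add: absolutely_integrable_on_def set_integrable_def integrable_iff_bounded)
qed

lemma L1_HK: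
  fixes w :: "real \<Rightarrow> real"
  assumes "L1_mem t w"
  shows "w integrable_on {0..t} \<and> (\<lambda>s. \<bar>w s\<bar>) integrable_on {0..t}"
proof -
  have a: "w absolutely_integrable_on {0..t}" by (rule L1_abs_int[OF assms])
  have "(norm \<circ> w) integrable_on {0..t}"
    by (rule set_lebesgue_integral_eq_integral(1)[OF absolutely_integrable_norm[OF a]])
  then show ?thesis using set_lebesgue_integral_eq_integral(1)[OF a] by (simp add: o_def)
qed

lemma classK_ext_cont:
  assumes "classK \<mu>"
  shows "continuous_on UNIV (\<lambda>x. \<mu> (max 0 x))"
proof -
  have "continuous_on {0..} \<mu>" using assms by (simp add: classK_def)
  then show ?thesis
    by (rule continuous_on_compose2[OF _ _ subset_UNIV_max]) (auto intro: continuous_intros)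
qed

lemma Linf_mu_L1:
  fixes w :: "real \<Rightarrow> 'a::real_normed_vector"
  assumes w: "Linf_mem t w" and K: "classK \<mu>"
  shows "L1_mem t (\<lambda>s. \<mu> (norm (w s)))"
proof -
  obtain D where D: "AE s in lebesgue. s \<in> {0..t} \<longrightarrow> norm (w s) \<le> D" and mw: "meas_on t w"
    using w by (auto simp: Linf_mem_def)
  have eq: "(\<lambda>s. \<mu> (norm (w s))) = (\<lambda>s. \<mu> (max 0 (norm (w s))))" by simp
  have m: "meas_on t (\<lambda>s. \<mu> (norm (w s)))"
    unfolding eq using mw unfolding meas_on_def
    by (intro borel_measurable_continuous_on[OF classK_ext_cont[OF K]]) measurable
  have "(\<integral>\<^sup>+ s. ennreal (norm (\<mu> (norm (w s)))) * indicator {0..t} s \<partial>lebesgue) \<le> (\<integral>\<^sup>+ s. ennreal (\<mu> (max D 0)) * indicator {0..t} s \<partial>lebesgue)"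
    using D
  proof (intro nn_integral_mono_AE, elim AE_mp, intro AE_I2 impI)
    fix s assume h: "s \<in> {0..t} \<longrightarrow> norm (w s) \<le> D"
    show "ennreal (norm (\<mu> (norm (w s)))) * indicator {0..t} s \<le> ennreal (\<mu> (max D 0)) * indicator {0..t} s"
    proof (cases "s \<in> {0..t}")
      case True
      then have "norm (w s) \<le> max D 0" using h by auto
      then have "\<mu> (norm (w s)) \<le> \<mu> (max D 0)" by (intro classK_mono[OF K]) auto
      moreover have "0 \<le> \<mu> (norm (w s))" by (intro classK_nonneg[OF K]) auto
      ultimately show ?thesis using True by (auto intro: ennreal_leI)
    qed simp
  qed
  also have "\<dots> = ennreal (\<mu> (max D 0)) * emeasure lebesgue {0..t}"
    by (simp add: nn_integral_cmult_indicator)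
  also have "\<dots> < \<infinity>" by (simp add: ennreal_mult_less_top emeasure_lborel_Icc_eq)
  finally show ?thesis using m by (simp add: L1_mem_def)
qed


lemma approx_integrable:
  fixes f :: "real \<Rightarrow> 'a::banach"
  assumes k: "k integrable_on {a..b}" and k0: "\<And>s. s \<in> {a..b} \<Longrightarrow> 0 \<le> k s"
    and H: "\<And>e. e > 0 \<Longrightarrow> \<exists>h. h integrable_on {a..b} \<and> (\<forall>s\<in>{a..b}. norm (f s - h s) \<le> e * k s)"
  shows "f integrable_on {a..b}"
proof -
  define KK where "KK = integral {a..b} k"
  have kI: "(k has_integral KK) (cbox a b)" unfolding KK_def cbox_interval by (rule integrable_integral[OF k])
  show ?thesis
    unfolding cbox_interval[symmetric] integrable_Cauchy
  proof (intro allI impI)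
    fix e :: real assume e: "e > 0"
    define e1 where "e1 = e / (4 * (\<bar>KK\<bar> + 1))"
    have e1: "e1 > 0" using e by (simp add: e1_def)
    obtain h where h: "h integrable_on cbox a b" "\<And>s. s \<in> cbox a b \<Longrightarrow> norm (f s - h s) \<le> e1 * k s"
      using H[OF e1] by (auto simp: cbox_interval)
    obtain \<gamma>1 where g1: "gauge \<gamma>1" and g1c: "\<And>D1 D2. D1 tagged_division_of cbox a b \<Longrightarrow> \<gamma>1 fine D1 \<Longrightarrow>
        D2 tagged_division_of cbox a b \<Longrightarrow> \<gamma>1 fine D2 \<Longrightarrow>
        norm ((\<Sum>(x,L)\<in>D1. Henstock_Kurzweil_Integration.content L *\<^sub>R h x) - (\<Sum>(x,L)\<in>D2. Henstock_Kurzweil_Integration.content L *\<^sub>R h x)) < e / 3"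
      using h(1)[unfolded integrable_Cauchy, rule_format, of "e/3"] e by auto
    obtain \<gamma>2 where g2: "gauge \<gamma>2" and g2c: "\<And>D. D tagged_division_of cbox a b \<Longrightarrow> \<gamma>2 fine D \<Longrightarrow>
        norm ((\<Sum>(x,L)\<in>D. Henstock_Kurzweil_Integration.content L *\<^sub>R k x) - KK) < 1"
      using kI[unfolded has_integral, rule_format, of 1] by auto
    have key: "norm ((\<Sum>(x,L)\<in>D. Henstock_Kurzweil_Integration.content L *\<^sub>R f x) - (\<Sum>(x,L)\<in>D. Henstock_Kurzweil_Integration.content L *\<^sub>R h x)) \<le> e / 4"
      if D: "D tagged_division_of cbox a b" "\<gamma>2 fine D" for D
    proof -
      have fin: "finite D" using D(1) by (rule tagged_division_ofD(1))
      have tags: "x \<in> cbox a b" if "(x, L) \<in> D" for x L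
        using tagged_division_ofD(2,3)[OF D(1) that] by blast
      have eq: "(\<Sum>(x,L)\<in>D. Henstock_Kurzweil_Integration.content L *\<^sub>R f x) - (\<Sum>(x,L)\<in>D. Henstock_Kurzweil_Integration.content L *\<^sub>R h x) = (\<Sum>(x,L)\<in>D. Henstock_Kurzweil_Integration.content L *\<^sub>R (f x - h x))"
        by (simp add: sum_subtractf[symmetric] case_prod_beta scaleR_diff_right)
      have "norm ((\<Sum>(x,L)\<in>D. Henstock_Kurzweil_Integration.content L *\<^sub>R f x) - (\<Sum>(x,L)\<in>D. Henstock_Kurzweil_Integration.content L *\<^sub>R h x)) \<le> (\<Sum>(x,L)\<in>D. norm (Henstock_Kurzweil_Integration.content L *\<^sub>R (f x - h x)))"
        unfolding eq using norm_sum[of "\<lambda>(x,L). Henstock_Kurzweil_Integration.content L *\<^sub>R (f x - h x)" D]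
        by (simp only: case_prod_unfold)
      also have "\<dots> \<le> (\<Sum>(x,L)\<in>D. Henstock_Kurzweil_Integration.content L * (e1 * k x))"
      proof (rule sum_mono, clarify)
        fix x L assume xL: "(x, L) \<in> D"
        have "norm (Henstock_Kurzweil_Integration.content L *\<^sub>R (f x - h x)) = Henstock_Kurzweil_Integration.content L * norm (f x - h x)" by simp
        also have "\<dots> \<le> Henstock_Kurzweil_Integration.content L * (e1 * k x)"
          using h(2)[OF tags[OF xL]] by (intro mult_left_mono) auto
        finally show "norm (Henstock_Kurzweil_Integration.content L *\<^sub>R (f x - h x)) \<le> Henstock_Kurzweil_Integration.content L * (e1 * k x)" .
      qed
      also have "\<dots> = e1 * (\<Sum>(x,L)\<in>D. Henstock_Kurzweil_Integration.content L *\<^sub>R k x)"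
        by (simp add: sum_distrib_left case_prod_beta algebra_simps)
      also have "\<dots> \<le> e1 * (\<bar>KK\<bar> + 1)"
      proof -
        have "(\<Sum>(x,L)\<in>D. Henstock_Kurzweil_Integration.content L *\<^sub>R k x) \<le> \<bar>KK\<bar> + 1" using g2c[OF D] unfolding real_norm_def by linarith
        then show ?thesis using e1 by (intro mult_left_mono) auto
      qed
      also have "\<dots> = e / 4"
      proof -
        have "\<bar>KK\<bar> + 1 > 0" by simp
        then show ?thesis by (simp add: e1_def field_simps)
      qed
      finally show ?thesis .
    qed
    show "\<exists>\<gamma>. gauge \<gamma> \<and> (\<forall>\<D>1 \<D>2. \<D>1 tagged_division_of cbox a b \<and> \<gamma> fine \<D>1 \<and>
            \<D>2 tagged_division_of cbox a b \<and> \<gamma> fine \<D>2 \<longrightarrow>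
            norm ((\<Sum>(x,L)\<in>\<D>1. Henstock_Kurzweil_Integration.content L *\<^sub>R f x) - (\<Sum>(x,L)\<in>\<D>2. Henstock_Kurzweil_Integration.content L *\<^sub>R f x)) < e)"
    proof (intro exI[of _ "\<lambda>x. \<gamma>1 x \<inter> \<gamma>2 x"] conjI allI impI)
      show "gauge (\<lambda>x. \<gamma>1 x \<inter> \<gamma>2 x)" using g1 g2 by (rule gauge_Int)
      fix D1 D2
      assume A: "D1 tagged_division_of cbox a b \<and> (\<lambda>x. \<gamma>1 x \<inter> \<gamma>2 x) fine D1 \<and>
            D2 tagged_division_of cbox a b \<and> (\<lambda>x. \<gamma>1 x \<inter> \<gamma>2 x) fine D2"
      then have D1: "D1 tagged_division_of cbox a b" "\<gamma>1 fine D1" "\<gamma>2 fine D1"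
        and D2: "D2 tagged_division_of cbox a b" "\<gamma>1 fine D2" "\<gamma>2 fine D2"
        by (auto simp: fine_Int)
      define S1f where "S1f = (\<Sum>(x,L)\<in>D1. Henstock_Kurzweil_Integration.content L *\<^sub>R f x)"
      define S2f where "S2f = (\<Sum>(x,L)\<in>D2. Henstock_Kurzweil_Integration.content L *\<^sub>R f x)"
      define S1h where "S1h = (\<Sum>(x,L)\<in>D1. Henstock_Kurzweil_Integration.content L *\<^sub>R h x)"
      define S2h where "S2h = (\<Sum>(x,L)\<in>D2. Henstock_Kurzweil_Integration.content L *\<^sub>R h x)"
      have a1: "norm (S1f - S1h) \<le> e / 4" using key[OF D1(1) D1(3)] by (simp add: S1f_def S1h_def)
      have a2: "norm (S2f - S2h) \<le> e / 4" using key[OF D2(1) D2(3)] by (simp add: S2f_def S2h_def)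
      have a3: "norm (S1h - S2h) < e / 3" using g1c[OF D1(1,2) D2(1,2)] by (simp add: S1h_def S2h_def)
      have "norm (S1f - S2f) = norm ((S1f - S1h) + (S1h - S2h) - (S2f - S2h))"
        by (rule arg_cong[where f=norm]) simp
      also have "\<dots> \<le> norm ((S1f - S1h) + (S1h - S2h)) + norm (S2f - S2h)" by (rule norm_triangle_ineq4)
      also have "\<dots> \<le> norm (S1f - S1h) + norm (S1h - S2h) + norm (S2f - S2h)"
        by (intro add_right_mono norm_triangle_ineq)
      finally have "norm (S1f - S2f) \<le> norm (S1f - S1h) + norm (S1h - S2h) + norm (S2f - S2h)" .
      then have "norm (S1f - S2f) < e" using a1 a2 a3 e by linarith
      then show "norm ((\<Sum>(x,L)\<in>D1. Henstock_Kurzweil_Integration.content L *\<^sub>R f x) - (\<Sum>(x,L)\<in>D2. Henstock_Kurzweil_Integration.content L *\<^sub>R f x)) < e"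
        by (simp add: S1f_def S2f_def)
    qed
  qed
qed

lemma step_approx:
  fixes g :: "real \<Rightarrow> 'a::banach" and c :: "real \<Rightarrow> real"
  assumes c: "c integrable_on {a..b}" and g: "continuous_on {a..b} g" and e: "e > 0"
  shows "\<exists>h. h integrable_on {a..b} \<and> (\<forall>s\<in>{a..b}. norm (c s *\<^sub>R g s - h s) \<le> e * \<bar>c s\<bar>)"
proof -
  have "uniformly_continuous_on {a..b} g" using g compact_Icc by (rule compact_uniformly_continuous)
  then obtain \<delta> where \<delta>: "\<delta> > 0" "\<And>x x'. x \<in> {a..b} \<Longrightarrow> x' \<in> {a..b} \<Longrightarrow> dist x' x < \<delta> \<Longrightarrow> dist (g x') (g x) < e"
    unfolding uniformly_continuous_on_def using e by metis
  define P where "P u v \<longleftrightarrow> (\<exists>h. h integrable_on {u..v} \<and> (\<forall>s\<in>{u..v}. norm (c s *\<^sub>R g s - h s) \<le> e * \<bar>c s\<bar>))" for u v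
  have base: "P u v" if uvp: "a \<le> u" "u \<le> v" "v \<le> b" "v - u < \<delta>" for u v
  proof -
    have ci: "c integrable_on {u..v}" using c by (rule integrable_on_subinterval) (use uvp in auto)
    have "(\<lambda>s. c s *\<^sub>R g u) integrable_on {u..v}" using ci by (rule integrable_on_scaleR_left)
    moreover have "norm (c s *\<^sub>R g s - c s *\<^sub>R g u) \<le> e * \<bar>c s\<bar>" if s: "s \<in> {u..v}" for s
    proof -
      have "dist (g s) (g u) < e" using \<delta>(2)[of u s] s uvp by (auto simp: dist_real_def)
      then have "norm (g s - g u) \<le> e" by (simp add: dist_norm)
      then have "\<bar>c s\<bar> * norm (g s - g u) \<le> \<bar>c s\<bar> * e" by (intro mult_left_mono) auto
      moreover have "norm (c s *\<^sub>R g s - c s *\<^sub>R g u) = \<bar>c s\<bar> * norm (g s - g u)"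
        by (simp add: scaleR_diff_right[symmetric])
      ultimately show ?thesis by (simp add: mult.commute)
    qed
    ultimately show ?thesis unfolding P_def by blast
  qed
  have comb: "P u v" if cp: "u \<le> m" "m \<le> v" "P u m" "P m v" for u m v
  proof -
    obtain h1 where h1: "h1 integrable_on {u..m}" "\<forall>s\<in>{u..m}. norm (c s *\<^sub>R g s - h1 s) \<le> e * \<bar>c s\<bar>"
      using cp(3) unfolding P_def by blast
    obtain h2 where h2: "h2 integrable_on {m..v}" "\<forall>s\<in>{m..v}. norm (c s *\<^sub>R g s - h2 s) \<le> e * \<bar>c s\<bar>"
      using cp(4) unfolding P_def by blast
    define h where "h s = (if s \<le> m then h1 s else h2 s)" for s
    have i1: "h integrable_on {u..m}" using h1(1) by (rule integrable_eq) (simp add: h_def)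
    have i2: "h integrable_on {m..v}"
      by (rule integrable_spike_finite[of "{m}", OF _ _ h2(1)]) (auto simp: h_def)
    have "h integrable_on {u..v}" by (rule Henstock_Kurzweil_Integration.integrable_combine[OF cp(1,2) i1 i2])
    moreover have "\<forall>s\<in>{u..v}. norm (c s *\<^sub>R g s - h s) \<le> e * \<bar>c s\<bar>"
      using h1(2) h2(2) by (auto simp: h_def)
    ultimately show ?thesis unfolding P_def by blast
  qed
  have ind: "\<forall>u v. a \<le> u \<longrightarrow> u \<le> v \<longrightarrow> v \<le> b \<longrightarrow> v - u \<le> real n * (\<delta> / 2) \<longrightarrow> P u v" for n
  proof (induction n)
    case 0 then show ?case using base \<delta>(1) by auto
  next
    case (Suc n)
    show ?case
    proof (intro allI impI)
      fix u v assume uv: "a \<le> u" "u \<le> v" "v \<le> b" "v - u \<le> real (Suc n) * (\<delta> / 2)"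
      show "P u v"
      proof (cases "v - u \<le> \<delta> / 2")
        case True then show ?thesis using base[OF uv(1-3)] \<delta>(1) by auto
      next
        case False
        define m where "m = v - \<delta> / 2"
        have m: "u \<le> m" "m \<le> v" "m - u \<le> real n * (\<delta> / 2)"
          using False uv(4) \<delta>(1) by (auto simp: m_def algebra_simps)
        have "P u m" using Suc.IH m uv by auto
        moreover have "P m v" using base[of m v] m uv \<delta>(1) by (auto simp: m_def)
        ultimately show ?thesis using comb[OF m(1,2)] by blast
      qed
    qed
  qed
  show ?thesis
  proof (cases "a \<le> b")
    case True
    obtain n :: nat where n: "(b - a) / (\<delta> / 2) \<le> real n" using real_arch_simple by blast
    then have "b - a \<le> real n * (\<delta> / 2)" using \<delta>(1) by (simp add: divide_le_eq)
    then have "P a b" using ind[of n] True by auto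
    then show ?thesis unfolding P_def by blast
  next
    case False
    then have "{a..b} = {}" by simp
    then show ?thesis by (intro exI[of _ "\<lambda>s. 0"]) auto
  qed
qed

lemma prod_integrable:
  fixes g :: "real \<Rightarrow> 'a::banach" and c :: "real \<Rightarrow> real"
  assumes c: "c integrable_on {a..b}" and ca: "(\<lambda>s. \<bar>c s\<bar>) integrable_on {a..b}"
    and g: "continuous_on {a..b} g"
  shows "(\<lambda>s. c s *\<^sub>R g s) integrable_on {a..b}"
  by (rule approx_integrable[OF ca]) (auto intro: step_approx[OF c g])


lemma classK_scale:
  assumes K: "classK \<mu>" and C: "C > 0"
  shows "classK (\<lambda>r. \<mu> (C * r))"
proof -
  have c: "continuous_on {0..} \<mu>" using K by (simp add: classK_def)
  have sub: "(\<lambda>r. C * r) ` {0..} \<subseteq> {0..}" using C by auto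
  have cc: "continuous_on {0..} (\<lambda>r. C * r)" by (intro continuous_intros)
  have "continuous_on {0..} (\<lambda>r. \<mu> (C * r))" using continuous_on_compose2[OF c cc sub] by simp
  moreover have "strict_mono_on {0..} (\<lambda>r. \<mu> (C * r))"
  proof (rule strict_mono_onI)
    fix r s :: real assume "r \<in> {0..}" "s \<in> {0..}" "r < s"
    moreover have "strict_mono_on {0..} \<mu>" using K by (simp add: classK_def)
    ultimately show "\<mu> (C * r) < \<mu> (C * s)" using C
      by (intro strict_mono_onD[of "{0..}" \<mu>]) auto
  qed
  moreover have "\<mu> (C * 0) = 0" using K by (simp add: classK_def)
  ultimately show ?thesis by (simp add: classK_def)
qed

lemma classKinf_scale:
  assumes K: "classKinf \<mu>" and C: "C > 0"
  shows "classKinf (\<lambda>r. \<mu> (C * r))"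
proof -
  have "filterlim (\<lambda>r::real. C * r) at_top at_top"
    by (rule filterlim_tendsto_pos_mult_at_top[OF tendsto_const C filterlim_ident])
  moreover have "filterlim \<mu> at_top at_top" using K by (simp add: classKinf_def)
  ultimately have "filterlim (\<lambda>r. \<mu> (C * r)) at_top at_top" by (rule filterlim_compose[rotated])
  then show ?thesis using classK_scale[OF _ C] K by (simp add: classKinf_def)
qed

lemma classK_sum:
  assumes fin: "finite E" and K: "\<And>b. b \<in> E \<Longrightarrow> classK (fs b)"
  shows "classK (\<lambda>r. r + (\<Sum>b\<in>E. fs b r))"
proof -
  have "continuous_on {0..} (\<lambda>r. r + (\<Sum>b\<in>E. fs b r))"
    using K by (intro continuous_on_add continuous_on_id continuous_on_sum) (auto simp: classK_def)
  moreover have "strict_mono_on {0..} (\<lambda>r. r + (\<Sum>b\<in>E. fs b r))"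
  proof (rule strict_mono_onI)
    fix r s :: real assume rs: "r \<in> {0..}" "s \<in> {0..}" "r < s"
    have "(\<Sum>b\<in>E. fs b r) \<le> (\<Sum>b\<in>E. fs b s)"
      using rs by (intro sum_mono classK_mono[OF K]) auto
    then show "r + (\<Sum>b\<in>E. fs b r) < s + (\<Sum>b\<in>E. fs b s)" using rs by simp
  qed
  moreover have "0 + (\<Sum>b\<in>E. fs b 0) = 0" using K by (simp add: classK_def)
  ultimately show ?thesis by (simp add: classK_def)
qed

lemma classKinf_sum:
  assumes fin: "finite E" and K: "\<And>b. b \<in> E \<Longrightarrow> classK (fs b)"
  shows "classKinf (\<lambda>r. r + (\<Sum>b\<in>E. fs b r))"
proof -
  have "\<forall>\<^sub>F r in at_top. r \<le> r + (\<Sum>b\<in>E. fs b r)"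
    using eventually_ge_at_top[of "0::real"]
  proof (rule eventually_mono)
    fix r :: real assume "0 \<le> r"
    then have "0 \<le> (\<Sum>b\<in>E. fs b r)" by (intro sum_nonneg classK_nonneg[OF K]) auto
    then show "r \<le> r + (\<Sum>b\<in>E. fs b r)" by simp
  qed
  then have "filterlim (\<lambda>r. r + (\<Sum>b\<in>E. fs b r)) at_top at_top"
    by (rule filterlim_at_top_mono[OF filterlim_ident])
  then show ?thesis using classK_sum[OF fin K] by (simp add: classKinf_def)
qed

lemma sum_le_classK_sum:
  assumes fin: "finite E" and K: "\<And>b. b \<in> E \<Longrightarrow> classK (fs b)" and r: "0 \<le> r"
  shows "(\<Sum>b\<in>E. fs b r) \<le> r + (\<Sum>b\<in>E. fs b r)"
  using r by simp

lemma term_le_classK_sum: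
  assumes fin: "finite E" and K: "\<And>b. b \<in> E \<Longrightarrow> classK (fs b)" and r: "0 \<le> r" and b: "b \<in> E"
  shows "fs b r \<le> r + (\<Sum>b\<in>E. fs b r)"
proof -
  have "fs b r \<le> (\<Sum>b\<in>E. fs b r)"
    using fin b r by (intro member_le_sum classK_nonneg[OF K]) auto
  then show ?thesis using r by simp
qed

lemma cscale_lin:
  assumes "cplx_struct I"
  shows "bounded_linear (\<lambda>z. cscale I z f) \<and> (\<forall>z. norm (cscale I z f) = cmod z * norm f)"
proof -
  have n: "norm (cscale I z f) = cmod z * norm f" for z
  proof -
    have "norm (Re z *\<^sub>R f + Im z *\<^sub>R I f) = cmod (Complex (Re z) (Im z)) * norm f"
      using assms unfolding cplx_struct_def by blast
    then show ?thesis by (simp add: cscale_def)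
  qed
  have bl: "bounded_linear (\<lambda>z. cscale I z f)"
  proof (rule bounded_linear_intro[where K="norm f"])
    show "cscale I (x + y) f = cscale I x f + cscale I y f" for x y
      by (simp add: cscale_def scaleR_add_left)
    show "cscale I (r *\<^sub>R x) f = r *\<^sub>R cscale I x f" for r x
      by (simp add: cscale_def scaleR_add_right)
    show "norm (cscale I x f) \<le> norm x * norm f" for x by (simp add: n)
  qed
  show ?thesis using bl n by blast
qed

lemma Bcol_eq:
  assumes "bounded_clin Iu Iy B"
  shows "Bcol Iy B f z = B (cscale Iu z f)"
proof -
  have bl: "bounded_linear B" and BI: "\<And>x. B (Iu x) = Iy (B x)" using assms by (auto simp: bounded_clin_def)
  show ?thesis
    unfolding Bcol_def cscale_def using bounded_linear.linear[OF bl] BI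
    by (simp add: linear_add linear_scale)
qed

lemma Bcol_real: "Bcol Iy B f (complex_of_real r) = r *\<^sub>R B f"
  by (simp add: Bcol_def cscale_def)

lemma Bcol_zero: "Bcol Iy B f 0 = 0"
  by (simp add: Bcol_def cscale_def)

lemma of_real_comp_bl:
  assumes "bounded_linear \<phi>"
  shows "bounded_linear (\<lambda>x. complex_of_real (\<phi> x))"
proof -
  have "bounded_linear (\<lambda>r::real. complex_of_real r)" by (rule bounded_linear_of_real)
  then show ?thesis using assms by (rule bounded_linear_compose)
qed

context sg begin

lemma zero_mild:
  assumes t: "t \<ge> 0"
  shows "mild Tm1 J (Bcol Iy B f) x0 (\<lambda>s. 0) t = Tm1 t (J x0)"
proof -
  have "integral {0..t} (\<lambda>s. Tm1 (t - s) (Bcol Iy B f 0)) = integral {0..t} (\<lambda>s. 0)"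
  proof (rule integral_cong)
    fix s assume "s \<in> {0..t}"
    then have "t - s \<ge> 0" by simp
    then show "Tm1 (t - s) (Bcol Iy B f 0) = 0" by (simp add: Bcol_zero linear_simps(3)[OF Tm1_bl])
  qed
  then show ?thesis by (simp add: mild_def)
qed

lemma J0: "J 0 = 0" using J_lin by (rule linear_0)

lemma Tm1_0: "t \<ge> 0 \<Longrightarrow> Tm1 t 0 = 0" using linear_simps(3)[OF Tm1_bl] by simp

end

context sgb begin

lemma decomp:
  fixes E :: "'u::banach set" and \<phi> :: "'u \<Rightarrow> 'u \<Rightarrow> real"
  assumes Bbl: "bounded_linear B" and fin: "finite E" and C: "C > 0"
    and \<phi>bl: "\<And>b. bounded_linear (\<phi> b)" and \<phi>C: "\<And>b x. \<bar>\<phi> b x\<bar> \<le> C * norm x"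
    and rep: "\<And>x. x = (\<Sum>b\<in>E. \<phi> b x *\<^sub>R b)"
    and t: "t \<ge> 0" and u: "L1_mem t u"
  shows "mild Tm1 J B x0 u t = Tm1 t (J x0) + (\<Sum>b\<in>E. mild Tm1 J (Bcol Iy B b) 0 (\<lambda>s. complex_of_real (\<phi> b (u s))) t)"
proof -
  have linB: "linear B" using Bbl by (rule bounded_linear.linear)
  have pw: "Tm1 (t - s) (B (u s)) = (\<Sum>b\<in>E. \<phi> b (u s) *\<^sub>R Tm1 (t - s) (B b))" if s: "s \<in> {0..t}" for s
  proof -
    have ts: "t - s \<ge> 0" using s by simp
    have linT: "linear (Tm1 (t - s))" using Tm1_bl[OF ts] by (rule bounded_linear.linear)
    have "B (u s) = B (\<Sum>b\<in>E. \<phi> b (u s) *\<^sub>R b)" using rep[of "u s"] by simp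
    also have "\<dots> = (\<Sum>b\<in>E. \<phi> b (u s) *\<^sub>R B b)" using linB by (simp add: linear_sum linear_scale)
    finally show ?thesis using linT by (simp add: linear_sum linear_scale)
  qed
  have intg: "(\<lambda>s. \<phi> b (u s) *\<^sub>R Tm1 (t - s) (B b)) integrable_on {0..t}" for b
  proof -
    have "L1_mem t (\<lambda>s. \<phi> b (u s)) \<and> L1_norm t (\<lambda>s. \<phi> b (u s)) \<le> C * L1_norm t u"
      using L1_dom[OF C _ meas_on_blin[OF \<phi>bl] u] \<phi>C u by (simp add: L1_mem_def)
    then have "(\<lambda>s. \<phi> b (u s)) integrable_on {0..t} \<and> (\<lambda>s. \<bar>\<phi> b (u s)\<bar>) integrable_on {0..t}"
      using L1_HK by blast
    then show ?thesis using prod_integrable Tm1_cont2[OF t] by blast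
  qed
  have "integral {0..t} (\<lambda>s. Tm1 (t - s) (B (u s))) = integral {0..t} (\<lambda>s. \<Sum>b\<in>E. \<phi> b (u s) *\<^sub>R Tm1 (t - s) (B b))"
    by (rule integral_cong) (rule pw)
  also have "\<dots> = (\<Sum>b\<in>E. integral {0..t} (\<lambda>s. \<phi> b (u s) *\<^sub>R Tm1 (t - s) (B b)))"
    by (rule integral_sum[OF fin intg])
  also have "\<dots> = (\<Sum>b\<in>E. mild Tm1 J (Bcol Iy B b) 0 (\<lambda>s. complex_of_real (\<phi> b (u s))) t)"
  proof (rule sum.cong[OF refl])
    fix b assume "b \<in> E"
    have "integral {0..t} (\<lambda>s. Tm1 (t - s) (Bcol Iy B b (complex_of_real (\<phi> b (u s)))))
        = integral {0..t} (\<lambda>s. \<phi> b (u s) *\<^sub>R Tm1 (t - s) (B b))"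
    proof (rule integral_cong)
      fix s assume "s \<in> {0..t}"
      then have ts: "t - s \<ge> 0" by simp
      show "Tm1 (t - s) (Bcol Iy B b (complex_of_real (\<phi> b (u s)))) = \<phi> b (u s) *\<^sub>R Tm1 (t - s) (B b)"
        using bounded_linear.linear[OF Tm1_bl[OF ts]] by (simp add: Bcol_real linear_scale)
    qed
    then show "integral {0..t} (\<lambda>s. \<phi> b (u s) *\<^sub>R Tm1 (t - s) (B b)) = mild Tm1 J (Bcol Iy B b) 0 (\<lambda>s. complex_of_real (\<phi> b (u s))) t"
      by (simp add: mild_def J0 Tm1_0[OF t])
  qed
  finally show ?thesis by (simp add: mild_def)
qed

end

theorem proposition20:
  fixes Ix :: "'x::banach \<Rightarrow> 'x" and T :: "real \<Rightarrow> 'x \<Rightarrow> 'x"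
    and \<beta> :: complex
    and Iy :: "'y::banach \<Rightarrow> 'y" and J :: "'x \<Rightarrow> 'y" and Tm1 :: "real \<Rightarrow> 'y \<Rightarrow> 'y"
    and Iu :: "'u::banach \<Rightarrow> 'u" and B :: "'u \<Rightarrow> 'y"
    and Z :: Zspace
  assumes "cplx_struct Ix"
    and "C0_semigroup Ix T"
    and "in_resolvent_set Ix T \<beta>"
    and "extrapolation Ix T \<beta> Iy J Tm1"
    and "cplx_struct Iu"
    and "\<exists>S. finite S \<and> span S = (UNIV :: 'u set)"
    and "bounded_clin Iu Iy B"
    and "(\<exists>\<Phi>. Young \<Phi> \<and> Z = EPhi \<Phi>) \<or> Z = L1 \<or> Z = Linfty"
  shows "(Z_ISS Z Tm1 J B \<longleftrightarrow> (\<forall>f. Z_ISS Z Tm1 J (Bcol Iy B f)))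
       \<and> (integral_ISS Tm1 J B \<longleftrightarrow> (\<forall>f. integral_ISS Tm1 J (Bcol Iy B f)))"
proof -
  interpret sg Ix T \<beta> Iy J Tm1 by unfold_locales (use assms in auto)
  have Zok: "Zok Z" using assms(8) by (simp add: Zok_def)
  have ZokL: "Zok Linfty" by (simp add: Zok_def)
  obtain E and \<phi> :: "'u \<Rightarrow> 'u \<Rightarrow> real" and C where fin: "finite E" and C: "C > 0"
    and \<phi>bl: "\<And>b. bounded_linear (\<phi> b)" and \<phi>C: "\<And>b x. \<bar>\<phi> b x\<bar> \<le> C * norm x"
    and rep: "\<And>x. x = (\<Sum>b\<in>E. \<phi> b x *\<^sub>R b)"
    using fin_dim_coords[OF assms(6)] by blast
  have Bbl: "bounded_linear B" using assms(7) by (simp add: bounded_clin_def)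
  have BcolE: "\<And>f z. Bcol Iy B f z = B (cscale Iu z f)" using Bcol_eq[OF assms(7)] .
  have Lf: "\<And>f. bounded_linear (\<lambda>z. cscale Iu z f)" and Lfn: "\<And>f z. norm (cscale Iu z f) = cmod z * norm f"
    using cscale_lin[OF assms(5)] by auto
  have Lb: "\<And>b. bounded_linear (\<lambda>x. complex_of_real (\<phi> b x))" by (rule of_real_comp_bl[OF \<phi>bl])
  have Lbn: "\<And>b x. norm (complex_of_real (\<phi> b x)) \<le> C * norm x" using \<phi>C by simp
  have Z1: "Z_ISS Z Tm1 J (Bcol Iy B f)" if ZB: "Z_ISS Z Tm1 J B" for f
  proof -
    obtain bt mu where bt: "classKL bt" and mu: "classKinf mu"
      and H: "\<And>t x0 u. t \<ge> 0 \<Longrightarrow> Z_mem Z t u \<Longrightarrow> (\<exists>\<xi>. J \<xi> = mild Tm1 J B x0 u t \<and> norm \<xi> \<le> bt (norm x0) t + mu (Z_norm Z t u))"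
      using ZB unfolding Z_ISS_def by blast
    define Cf where "Cf = norm f + 1"
    have Cf: "Cf > 0" by (simp add: Cf_def add_nonneg_pos)
    have LC: "norm (cscale Iu z f) \<le> Cf * norm z" for z
      unfolding Lfn Cf_def by (simp add: algebra_simps)
    have muK: "classK mu" using mu by (simp add: classKinf_def)
    show ?thesis unfolding Z_ISS_def
    proof (intro exI[of _ bt] exI[of _ "\<lambda>r. mu (Cf * r)"] conjI allI impI bt classKinf_scale[OF mu Cf])
      fix t x0 and u :: "real \<Rightarrow> complex" assume t: "0 \<le> t" and u: "Z_mem Z t u"
      define v where "v s = cscale Iu (u s) f" for s
      have zv: "Z_mem Z t v \<and> Z_norm Z t v \<le> Cf * Z_norm Z t u"
        unfolding v_def by (rule Z_comp[OF Zok Lf Cf LC u])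
      obtain \<xi> where \<xi>: "J \<xi> = mild Tm1 J B x0 v t" "norm \<xi> \<le> bt (norm x0) t + mu (Z_norm Z t v)"
        using H[OF t] zv by blast
      have me: "mild Tm1 J B x0 v t = mild Tm1 J (Bcol Iy B f) x0 u t"
        by (simp add: mild_def v_def BcolE)
      have "mu (Z_norm Z t v) \<le> mu (Cf * Z_norm Z t u)"
        using zv Z_nonneg[OF Zok] by (intro classK_mono[OF muK]) auto
      then show "\<exists>\<xi>. J \<xi> = mild Tm1 J (Bcol Iy B f) x0 u t \<and> norm \<xi> \<le> bt (norm x0) t + mu (Cf * Z_norm Z t u)"
        using \<xi> me by (intro exI[of _ \<xi>]) auto
    qed
  qed
  have I1: "integral_ISS Tm1 J (Bcol Iy B f)" if IB: "integral_ISS Tm1 J B" for f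
  proof -
    obtain bt th mu where bt: "classKL bt" and th: "classKinf th" and mu: "classK mu"
      and H: "\<And>t x0 u. t \<ge> 0 \<Longrightarrow> Linf_mem t u \<Longrightarrow> (\<exists>\<xi>. J \<xi> = mild Tm1 J B x0 u t \<and>
              norm \<xi> \<le> bt (norm x0) t + th (integral {0..t} (\<lambda>s. mu (norm (u s)))))"
      using IB unfolding integral_ISS_def by blast
    define Cf where "Cf = norm f + 1"
    have Cf: "Cf > 0" by (simp add: Cf_def add_nonneg_pos)
    have LC: "norm (cscale Iu z f) \<le> Cf * norm z" for z
      unfolding Lfn Cf_def by (simp add: algebra_simps)
    have thK: "classK th" using th by (simp add: classKinf_def)
    have mu': "classK (\<lambda>r. mu (Cf * r))" by (rule classK_scale[OF mu Cf])
    have key: "\<exists>\<xi>. J \<xi> = mild Tm1 J (Bcol Iy B f) x0 u t \<and>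
              norm \<xi> \<le> bt (norm x0) t + th (integral {0..t} (\<lambda>s. mu (Cf * norm (u s))))"
      if t: "0 \<le> t" and u: "Linf_mem t u" for t x0 and u :: "real \<Rightarrow> complex"
    proof -
      define v where "v s = cscale Iu (u s) f" for s
      have mu_: "meas_on t u" using u by (simp add: Linf_mem_def)
      have lv: "Linf_mem t v \<and> Linf_norm t v \<le> Cf * Linf_norm t u"
        unfolding v_def by (rule Linf_dom[OF Cf LC meas_on_blin[OF Lf mu_] u])
      obtain \<xi> where \<xi>: "J \<xi> = mild Tm1 J B x0 v t" "norm \<xi> \<le> bt (norm x0) t + th (integral {0..t} (\<lambda>s. mu (norm (v s))))"
        using H[OF t] lv by blast
      have me: "mild Tm1 J B x0 v t = mild Tm1 J (Bcol Iy B f) x0 u t"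
        by (simp add: mild_def v_def BcolE)
      have i1: "(\<lambda>s. mu (norm (v s))) integrable_on {0..t}"
        using L1_HK[OF Linf_mu_L1[OF conjunct1[OF lv] mu]] by blast
      have i2: "(\<lambda>s. mu (Cf * norm (u s))) integrable_on {0..t}"
        using L1_HK[OF Linf_mu_L1[OF u mu']] by blast
      have le: "integral {0..t} (\<lambda>s. mu (norm (v s))) \<le> integral {0..t} (\<lambda>s. mu (Cf * norm (u s)))"
        by (rule integral_le[OF i1 i2]) (use LC in \<open>auto simp: v_def intro!: classK_mono[OF mu]\<close>)
      have nn: "0 \<le> integral {0..t} (\<lambda>s. mu (norm (v s)))"
        by (rule Henstock_Kurzweil_Integration.integral_nonneg[OF i1]) (auto intro: classK_nonneg[OF mu])
      have "th (integral {0..t} (\<lambda>s. mu (norm (v s)))) \<le> th (integral {0..t} (\<lambda>s. mu (Cf * norm (u s))))"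
        by (rule classK_mono[OF thK nn le])
      then show "\<exists>\<xi>. J \<xi> = mild Tm1 J (Bcol Iy B f) x0 u t \<and>
              norm \<xi> \<le> bt (norm x0) t + th (integral {0..t} (\<lambda>s. mu (Cf * norm (u s))))"
        using \<xi> me by (intro exI[of _ \<xi>]) auto
    qed
    show ?thesis unfolding integral_ISS_def
      apply (rule exI[of _ bt], rule exI[of _ th], rule exI[of _ "\<lambda>r. mu (Cf * r)"])
      using bt th mu' key by blast
  qed
  have Z2: "Z_ISS Z Tm1 J B" if HZ: "\<forall>f. Z_ISS Z Tm1 J (Bcol Iy B f)"
  proof -
    have "\<forall>f. \<exists>bt mu. classKL bt \<and> classKinf mu \<and> (\<forall>t\<ge>0. \<forall>x0 u. Z_mem Z t u \<longrightarrow>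
          (\<exists>\<xi>. J \<xi> = mild Tm1 J (Bcol Iy B f) x0 u t \<and> norm \<xi> \<le> bt (norm x0) t + mu (Z_norm Z t u)))"
      using HZ unfolding Z_ISS_def by blast
    from choice[OF this] obtain bs where
      "\<forall>f. \<exists>mu. classKL (bs f) \<and> classKinf mu \<and> (\<forall>t\<ge>0. \<forall>x0 u. Z_mem Z t u \<longrightarrow>
          (\<exists>\<xi>. J \<xi> = mild Tm1 J (Bcol Iy B f) x0 u t \<and> norm \<xi> \<le> bs f (norm x0) t + mu (Z_norm Z t u)))"
      by blast
    from choice[OF this] obtain ms where P:
      "\<forall>f. classKL (bs f) \<and> classKinf (ms f) \<and> (\<forall>t\<ge>0. \<forall>x0 u. Z_mem Z t u \<longrightarrow>
          (\<exists>\<xi>. J \<xi> = mild Tm1 J (Bcol Iy B f) x0 u t \<and> norm \<xi> \<le> bs f (norm x0) t + ms f (Z_norm Z t u)))"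
      by blast
    have bsK: "\<And>f. classKL (bs f)" and msK: "\<And>f. classK (ms f)" and msKi: "\<And>f. classKinf (ms f)"
      using P by (auto simp: classKinf_def)
    have HH: "\<And>f t x0 u. t \<ge> 0 \<Longrightarrow> Z_mem Z t u \<Longrightarrow>
          \<exists>\<xi>. J \<xi> = mild Tm1 J (Bcol Iy B f) x0 u t \<and> norm \<xi> \<le> bs f (norm x0) t + ms f (Z_norm Z t u)"
      using P by blast
    have bs0: "bs f 0 t = 0" if "t \<ge> 0" for f t
      using bsK[of f] that by (simp add: classKL_def classK_def)
    have ms0: "ms f 0 = 0" for f using msK[of f] by (simp add: classK_def)
    have X0: "\<exists>\<xi>. J \<xi> = Tm1 t (J x0) \<and> norm \<xi> \<le> bs 0 (norm x0) t" if t: "t \<ge> 0" for t x0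
    proof -
      have z: "Z_mem Z t (\<lambda>s. 0::complex) \<and> Z_norm Z t (\<lambda>s. 0::complex) = 0" by (rule Z_zero[OF Zok])
      obtain \<xi> where "J \<xi> = mild Tm1 J (Bcol Iy B 0) x0 (\<lambda>s. 0) t"
        "norm \<xi> \<le> bs 0 (norm x0) t + ms 0 (Z_norm Z t (\<lambda>s. 0::complex))"
        using HH[OF t conjunct1[OF z], of 0 x0] by blast
      then show ?thesis using z by (intro exI[of _ \<xi>]) (simp add: zero_mild[OF t] ms0)
    qed
    obtain M where M0: "M \<ge> 0" and Mb: "\<And>t x. t \<ge> 0 \<Longrightarrow> norm (T t x) \<le> M * norm x"
      using zero_input_bound[OF bsK[of 0] X0] by blast
    interpret sgb Ix T \<beta> Iy J Tm1 M by unfold_locales (use M0 Mb in auto)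
    define mu where "mu r = r + (\<Sum>b\<in>E. ms b (C * r))" for r
    have muKi: "classKinf mu" unfolding mu_def
      by (rule classKinf_sum[OF fin classK_scale[OF msK C]])
    show ?thesis unfolding Z_ISS_def
    proof (intro exI[of _ "bs 0"] exI[of _ mu] conjI allI impI bsK muKi)
      fix t x0 and u :: "real \<Rightarrow> 'u" assume t: "0 \<le> t" and u: "Z_mem Z t u"
      define c where "c b s = complex_of_real (\<phi> b (u s))" for b s
      have zc: "Z_mem Z t (c b) \<and> Z_norm Z t (c b) \<le> C * Z_norm Z t u" for b
        unfolding c_def by (rule Z_comp[OF Zok Lb C Lbn u])
      have nu: "0 \<le> Z_norm Z t u" by (rule Z_nonneg[OF Zok u])
      obtain \<xi>0 where \<xi>0: "J \<xi>0 = Tm1 t (J x0)" "norm \<xi>0 \<le> bs 0 (norm x0) t" using X0[OF t] by blast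
      have "\<forall>b\<in>E. \<exists>\<xi>. J \<xi> = mild Tm1 J (Bcol Iy B b) 0 (c b) t \<and> norm \<xi> \<le> ms b (C * Z_norm Z t u)"
      proof
        fix b assume "b \<in> E"
        obtain \<xi> where \<xi>: "J \<xi> = mild Tm1 J (Bcol Iy B b) 0 (c b) t" "norm \<xi> \<le> bs b (norm (0::'x)) t + ms b (Z_norm Z t (c b))"
          using HH[OF t conjunct1[OF zc], of b 0] by blast
        have "ms b (Z_norm Z t (c b)) \<le> ms b (C * Z_norm Z t u)"
          using zc Z_nonneg[OF Zok conjunct1[OF zc]] by (intro classK_mono[OF msK]) auto
        then show "\<exists>\<xi>. J \<xi> = mild Tm1 J (Bcol Iy B b) 0 (c b) t \<and> norm \<xi> \<le> ms b (C * Z_norm Z t u)"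
          using \<xi> bs0[OF t] by (intro exI[of _ \<xi>]) auto
      qed
      then obtain \<xi>s where \<xi>s: "\<And>b. b \<in> E \<Longrightarrow> J (\<xi>s b) = mild Tm1 J (Bcol Iy B b) 0 (c b) t"
        "\<And>b. b \<in> E \<Longrightarrow> norm (\<xi>s b) \<le> ms b (C * Z_norm Z t u)"
        by metis
      have uL1: "L1_mem t u" by (rule Z_L1[OF Zok u])
      have dec: "mild Tm1 J B x0 u t = Tm1 t (J x0) + (\<Sum>b\<in>E. mild Tm1 J (Bcol Iy B b) 0 (c b) t)"
        unfolding c_def by (rule decomp[OF Bbl fin C \<phi>bl \<phi>C rep t uL1])
      have "J (\<xi>0 + (\<Sum>b\<in>E. \<xi>s b)) = J \<xi>0 + (\<Sum>b\<in>E. J (\<xi>s b))"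
        using J_lin by (simp add: linear_add linear_sum)
      also have "\<dots> = mild Tm1 J B x0 u t" using \<xi>0(1) \<xi>s(1) dec by simp
      finally have eqJ: "J (\<xi>0 + (\<Sum>b\<in>E. \<xi>s b)) = mild Tm1 J B x0 u t" .
      have "norm (\<xi>0 + (\<Sum>b\<in>E. \<xi>s b)) \<le> norm \<xi>0 + (\<Sum>b\<in>E. norm (\<xi>s b))"
        by (metis norm_triangle_ineq norm_sum add_left_mono order_trans)
      also have "\<dots> \<le> bs 0 (norm x0) t + (\<Sum>b\<in>E. ms b (C * Z_norm Z t u))"
        using \<xi>0(2) \<xi>s(2) by (intro add_mono sum_mono) auto
      also have "\<dots> \<le> bs 0 (norm x0) t + mu (Z_norm Z t u)"
        using nu by (simp add: mu_def)
      finally show "\<exists>\<xi>. J \<xi> = mild Tm1 J B x0 u t \<and> norm \<xi> \<le> bs 0 (norm x0) t + mu (Z_norm Z t u)"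
        using eqJ by blast
    qed
  qed
  have I2: "integral_ISS Tm1 J B" if HI: "\<forall>f. integral_ISS Tm1 J (Bcol Iy B f)"
  proof -
    have "\<forall>f. \<exists>bt th mu. classKL bt \<and> classKinf th \<and> classK mu \<and> (\<forall>t\<ge>0. \<forall>x0 u. Linf_mem t u \<longrightarrow>
          (\<exists>\<xi>. J \<xi> = mild Tm1 J (Bcol Iy B f) x0 u t \<and> norm \<xi> \<le> bt (norm x0) t + th (integral {0..t} (\<lambda>s. mu (norm (u s))))))"
      using HI unfolding integral_ISS_def by blast
    from choice[OF this] obtain bs where
      "\<forall>f. \<exists>th mu. classKL (bs f) \<and> classKinf th \<and> classK mu \<and> (\<forall>t\<ge>0. \<forall>x0 u. Linf_mem t u \<longrightarrow>
          (\<exists>\<xi>. J \<xi> = mild Tm1 J (Bcol Iy B f) x0 u t \<and> norm \<xi> \<le> bs f (norm x0) t + th (integral {0..t} (\<lambda>s. mu (norm (u s))))))"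
      by blast
    from choice[OF this] obtain ths where
      "\<forall>f. \<exists>mu. classKL (bs f) \<and> classKinf (ths f) \<and> classK mu \<and> (\<forall>t\<ge>0. \<forall>x0 u. Linf_mem t u \<longrightarrow>
          (\<exists>\<xi>. J \<xi> = mild Tm1 J (Bcol Iy B f) x0 u t \<and> norm \<xi> \<le> bs f (norm x0) t + ths f (integral {0..t} (\<lambda>s. mu (norm (u s))))))"
      by blast
    from choice[OF this] obtain mus where P:
      "\<forall>f. classKL (bs f) \<and> classKinf (ths f) \<and> classK (mus f) \<and> (\<forall>t\<ge>0. \<forall>x0 u. Linf_mem t u \<longrightarrow>
          (\<exists>\<xi>. J \<xi> = mild Tm1 J (Bcol Iy B f) x0 u t \<and> norm \<xi> \<le> bs f (norm x0) t + ths f (integral {0..t} (\<lambda>s. mus f (norm (u s))))))"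
      by blast
    have bsK: "\<And>f. classKL (bs f)" and thK: "\<And>f. classK (ths f)" and muK: "\<And>f. classK (mus f)"
      using P by (auto simp: classKinf_def)
    have HH: "\<And>f t x0 u. t \<ge> 0 \<Longrightarrow> Linf_mem t u \<Longrightarrow>
          \<exists>\<xi>. J \<xi> = mild Tm1 J (Bcol Iy B f) x0 u t \<and> norm \<xi> \<le> bs f (norm x0) t + ths f (integral {0..t} (\<lambda>s. mus f (norm (u s))))"
      using P by blast
    have bs0: "bs f 0 t = 0" if "t \<ge> 0" for f t
      using bsK[of f] that by (simp add: classKL_def classK_def)
    have th0: "ths f 0 = 0" for f using thK[of f] by (simp add: classK_def)
    have mu0: "mus f 0 = 0" for f using muK[of f] by (simp add: classK_def)
    have X0: "\<exists>\<xi>. J \<xi> = Tm1 t (J x0) \<and> norm \<xi> \<le> bs 0 (norm x0) t" if t: "t \<ge> 0" for t x0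
    proof -
      have "Z_mem Linfty t (\<lambda>s. 0::complex)" using Z_zero[OF ZokL] by blast
      then have z: "Linf_mem t (\<lambda>s. 0::complex)" by simp
      obtain \<xi> where "J \<xi> = mild Tm1 J (Bcol Iy B 0) x0 (\<lambda>s. 0) t"
        "norm \<xi> \<le> bs 0 (norm x0) t + ths 0 (integral {0..t} (\<lambda>s. mus 0 (norm ((\<lambda>s. 0::complex) s))))"
        using HH[OF t z, of 0 x0] by blast
      then show ?thesis by (intro exI[of _ \<xi>]) (simp add: zero_mild[OF t] mu0 th0)
    qed
    obtain M where M0: "M \<ge> 0" and Mb: "\<And>t x. t \<ge> 0 \<Longrightarrow> norm (T t x) \<le> M * norm x"
      using zero_input_bound[OF bsK[of 0] X0] by blast
    interpret sgb Ix T \<beta> Iy J Tm1 M by unfold_locales (use M0 Mb in auto)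
    define mu where "mu r = r + (\<Sum>b\<in>E. mus b (C * r))" for r
    define th where "th r = r + (\<Sum>b\<in>E. ths b r)" for r
    have muK': "classK mu" unfolding mu_def by (rule classK_sum[OF fin classK_scale[OF muK C]])
    have thKi: "classKinf th" unfolding th_def by (rule classKinf_sum[OF fin thK])
    have key: "\<exists>\<xi>. J \<xi> = mild Tm1 J B x0 u t \<and> norm \<xi> \<le> bs 0 (norm x0) t + th (integral {0..t} (\<lambda>s. mu (norm (u s))))"
      if t: "0 \<le> t" and u: "Linf_mem t u" for t x0 and u :: "real \<Rightarrow> 'u"
    proof -
      define c where "c b s = complex_of_real (\<phi> b (u s))" for b s
      have mu_: "meas_on t u" using u by (simp add: Linf_mem_def)
      have lc: "Linf_mem t (c b)" for b
        using Linf_dom[OF C Lbn meas_on_blin[OF Lb mu_] u] unfolding c_def by blast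
      define I where "I = integral {0..t} (\<lambda>s. mu (norm (u s)))"
      have iI: "(\<lambda>s. mu (norm (u s))) integrable_on {0..t}"
        using L1_HK[OF Linf_mu_L1[OF u muK']] by blast
      have I0: "0 \<le> I" unfolding I_def
        by (rule Henstock_Kurzweil_Integration.integral_nonneg[OF iI]) (auto intro: classK_nonneg[OF muK'])
      obtain \<xi>0 where \<xi>0: "J \<xi>0 = Tm1 t (J x0)" "norm \<xi>0 \<le> bs 0 (norm x0) t" using X0[OF t] by blast
      have "\<forall>b\<in>E. \<exists>\<xi>. J \<xi> = mild Tm1 J (Bcol Iy B b) 0 (c b) t \<and> norm \<xi> \<le> ths b I"
      proof
        fix b assume b: "b \<in> E"
        obtain \<xi> where \<xi>: "J \<xi> = mild Tm1 J (Bcol Iy B b) 0 (c b) t"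
          "norm \<xi> \<le> bs b (norm (0::'x)) t + ths b (integral {0..t} (\<lambda>s. mus b (norm (c b s))))"
          using HH[OF t lc, of b 0] by blast
        have ib: "(\<lambda>s. mus b (norm (c b s))) integrable_on {0..t}"
          using L1_HK[OF Linf_mu_L1[OF lc muK]] by blast
        have le: "integral {0..t} (\<lambda>s. mus b (norm (c b s))) \<le> I"
          unfolding I_def
        proof (rule integral_le[OF ib iI])
          fix s assume "s \<in> {0..t}"
          have "mus b (norm (c b s)) \<le> mus b (C * norm (u s))"
            using Lbn[of b "u s"] by (intro classK_mono[OF muK]) (auto simp: c_def)
          also have "\<dots> \<le> mu (norm (u s))"
            unfolding mu_def using term_le_classK_sum[OF fin classK_scale[OF muK C], of "norm (u s)" b] b by simp
          finally show "mus b (norm (c b s)) \<le> mu (norm (u s))" .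
        qed
        have nn: "0 \<le> integral {0..t} (\<lambda>s. mus b (norm (c b s)))"
          by (rule Henstock_Kurzweil_Integration.integral_nonneg[OF ib]) (auto intro: classK_nonneg[OF muK])
        have "ths b (integral {0..t} (\<lambda>s. mus b (norm (c b s)))) \<le> ths b I"
          by (rule classK_mono[OF thK nn le])
        then show "\<exists>\<xi>. J \<xi> = mild Tm1 J (Bcol Iy B b) 0 (c b) t \<and> norm \<xi> \<le> ths b I"
          using \<xi> bs0[OF t] by (intro exI[of _ \<xi>]) auto
      qed
      then obtain \<xi>s where \<xi>s: "\<And>b. b \<in> E \<Longrightarrow> J (\<xi>s b) = mild Tm1 J (Bcol Iy B b) 0 (c b) t"
        "\<And>b. b \<in> E \<Longrightarrow> norm (\<xi>s b) \<le> ths b I"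
        by metis
      have uL1: "L1_mem t u" by (rule Z_L1[OF ZokL]) (use u in simp)
      have dec: "mild Tm1 J B x0 u t = Tm1 t (J x0) + (\<Sum>b\<in>E. mild Tm1 J (Bcol Iy B b) 0 (c b) t)"
        unfolding c_def by (rule decomp[OF Bbl fin C \<phi>bl \<phi>C rep t uL1])
      have "J (\<xi>0 + (\<Sum>b\<in>E. \<xi>s b)) = J \<xi>0 + (\<Sum>b\<in>E. J (\<xi>s b))"
        using J_lin by (simp add: linear_add linear_sum)
      also have "\<dots> = mild Tm1 J B x0 u t" using \<xi>0(1) \<xi>s(1) dec by simp
      finally have eqJ: "J (\<xi>0 + (\<Sum>b\<in>E. \<xi>s b)) = mild Tm1 J B x0 u t" .
      have "norm (\<xi>0 + (\<Sum>b\<in>E. \<xi>s b)) \<le> norm \<xi>0 + (\<Sum>b\<in>E. norm (\<xi>s b))"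
        by (metis norm_triangle_ineq norm_sum add_left_mono order_trans)
      also have "\<dots> \<le> bs 0 (norm x0) t + (\<Sum>b\<in>E. ths b I)"
        using \<xi>0(2) \<xi>s(2) by (intro add_mono sum_mono) auto
      also have "\<dots> \<le> bs 0 (norm x0) t + th I"
        using I0 by (simp add: th_def)
      finally show "\<exists>\<xi>. J \<xi> = mild Tm1 J B x0 u t \<and> norm \<xi> \<le> bs 0 (norm x0) t + th (integral {0..t} (\<lambda>s. mu (norm (u s))))"
        using eqJ unfolding I_def by blast
    qed
    show ?thesis unfolding integral_ISS_def
      apply (rule exI[of _ "bs 0"], rule exI[of _ th], rule exI[of _ mu])
      using bsK thKi muK' key by blast
  qed
  show ?thesis using Z1 Z2 I1 I2 by blast
qed


end
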